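(* Let $f:\mathbb{R}^n\to\mathbb{R}$ be convex and differentiable with $\|\nabla f(x)-\nabla f(y)\|_2\le L\|x-y\|_2$ for all $x,y$, attaining its minimum $f_*$ at $x_*$. Run the mirror triangle method with inexact directional derivatives (see context) from $x_0$ with noise level $\delta$, and let $\frac12P_0^2=\frac12\|x_0-x_*\|_L^2+(1-\frac1n)(f(x_0)-f_* )$. Fix $\varepsilon>0$ and let $$N=\Big\lceil\frac{\sqrt2\,nP_0}{\sqrt\varepsilon}+1-2n\Big\rceil,$$ assumed to satisfy $N\ge1$, and suppose $$\delta\le\min\Big\{\frac{\varepsilon^{3/4}\sqrt L}{4\sqrt[4]{2}\sqrt{nP_0}},\ \frac{\varepsilon^{3/2}\sqrt L}{96\sqrt n\,P_0^2}\Big\}.$$ Then $\mathbb{E}f(x_N)-f(x_* )\le3\varepsilon$.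
   Context: $\|x\|_L^2=L\sum_{i=1}^nx_i^2$. Random directions: for each $k\ge0$, $e_{k+1}$ is a random vector on the Euclidean unit sphere of $\mathbb{R}^n$ such that, conditionally on all randomness of the previous iterations, $\mathbb{E}[e_{k+1}^ie_{k+1}^j]=0$ for $i\ne j$ and $\mathbb{E}[(e_{k+1}^i)^2]=\frac1n$ for all $i$ ($e^i$ denotes the $i$-th coordinate); $\tilde\delta_{k+1}\in\mathbb{R}$ is a random noise with $|\tilde\delta_{k+1}|\le\delta$. The oracle returns $\tilde\nabla f(y)=n(\langle\nabla f(y),e_{k+1}\rangle+\tilde\delta_{k+1})e_{k+1}$ instead of $\nabla f(y)$. Method: $x_0=u_0=y_0$, $\alpha_0=1-\frac1n$, $A_0=\alpha_0$; for $k\ge0$: $\alpha_{k+1}=\frac{k+2n}{2n^2}$, $A_{k+1}=A_k+\alpha_{k+1}$, $y_{k+1}=\frac{\alpha_{k+1}u_k+A_kx_k}{A_{k+1}}$, generate $\tilde\nabla f(y_{k+1})$, $u_{k+1}=\arg\min_{x\in\mathbb{R}^n}\{\frac12\|x-u_k\|_L^2+\alpha_{k+1}\langle\tilde\nabla f(y_{k+1}),x\rangle\}$, $x_{k+1}=y_{k+1}+n\frac{\alpha_{k+1}}{A_{k+1}}(u_{k+1}-u_k)$. *)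

theory Defs
  imports "HOL-Probability.Probability"
begin

definition normL :: "real \<Rightarrow> real^'n \<Rightarrow> real" where
  "normL L x = sqrt (L * (\<Sum>i\<in>UNIV. (x $ i)^2))"

fun mtm_alpha :: "nat \<Rightarrow> nat \<Rightarrow> real" where
  "mtm_alpha n 0 = 1 - 1 / real n"
| "mtm_alpha n (Suc k) = (real k + 2 * real n) / (2 * (real n)^2)"

definition mtm_A :: "nat \<Rightarrow> nat \<Rightarrow> real" where
  "mtm_A n k = (\<Sum>j\<le>k. mtm_alpha n j)"

definition mtm_step :: "real \<Rightarrow> (real^'n \<Rightarrow> real^'n) \<Rightarrow> nat
    \<Rightarrow> ((real^'n) \<times> (real^'n)) \<Rightarrow> real^'n \<Rightarrow> real \<Rightarrow> ((real^'n) \<times> (real^'n))" where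
  "mtm_step L gradf k s e d =
     (let n = CARD('n); x = fst s; u = snd s;
          a = mtm_alpha n (Suc k); A = mtm_A n k; A' = mtm_A n (Suc k);
          y = (1 / A') *\<^sub>R (a *\<^sub>R u + A *\<^sub>R x);
          g = (real n * (gradf y \<bullet> e + d)) *\<^sub>R e;
          u' = arg_min (\<lambda>z. 1/2 * (normL L (z - u))^2 + a * (g \<bullet> z)) (\<lambda>_. True);
          x' = y + (real n * a / A') *\<^sub>R (u' - u)
      in (x', u'))"

text \<open>State (x_k, u_k) after k iterations, for given realisations of the
  directions e_1, e_2, ... and noises delta~_1, delta~_2, ... (index 0 unused).\<close>
primrec mtm :: "real \<Rightarrow> (real^'n \<Rightarrow> real^'n) \<Rightarrow> real^'n
    \<Rightarrow> (nat \<Rightarrow> real^'n) \<Rightarrow> (nat \<Rightarrow> real) \<Rightarrow> nat \<Rightarrow> ((real^'n) \<times> (real^'n))" where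
  "mtm L gradf x0 e d 0 = (x0, x0)"
| "mtm L gradf x0 e d (Suc k) = mtm_step L gradf k (mtm L gradf x0 e d k) (e (Suc k)) (d (Suc k))"

end

theory Submission
  imports Defs
begin

lemma sum_sq_norm: "(\<Sum>i\<in>UNIV. (x $ i)^2) = (norm (x::real^'n))^2"
  by (simp add: norm_vec_def L2_set_def sum_nonneg)

lemma normL_sq: "L \<ge> 0 \<Longrightarrow> (normL L x)^2 = L * (norm x)^2"
  unfolding normL_def sum_sq_norm by simp

lemma line_deriv:
  fixes f :: "real^'n \<Rightarrow> real"
  assumes grad: "\<And>x. (f has_derivative (\<lambda>h. gradf x \<bullet> h)) (at x)"
  shows "((\<lambda>t. f (y + t *\<^sub>R h)) has_real_derivative (gradf (y + t *\<^sub>R h) \<bullet> h)) (at t)"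
proof -
  have d1: "((\<lambda>t. y + t *\<^sub>R h) has_derivative (\<lambda>s. s *\<^sub>R h)) (at t)"
    by (auto intro!: derivative_eq_intros)
  have "((\<lambda>t. f (y + t *\<^sub>R h)) has_derivative ((\<lambda>v. gradf (y + t *\<^sub>R h) \<bullet> v) \<circ> (\<lambda>s. s *\<^sub>R h))) (at t)"
    using has_derivative_compose[OF d1 grad] by (simp add: o_def)
  moreover have "((\<lambda>v. gradf (y + t *\<^sub>R h) \<bullet> v) \<circ> (\<lambda>s. s *\<^sub>R h)) = (*) (gradf (y + t *\<^sub>R h) \<bullet> h)"
    by (auto simp: o_def fun_eq_iff)
  ultimately show ?thesis by (simp add: has_field_derivative_def)
qed

lemma descent:
  fixes f :: "real^'n \<Rightarrow> real"
  assumes grad: "\<And>x. (f has_derivative (\<lambda>h. gradf x \<bullet> h)) (at x)"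
    and lip: "\<And>x y. norm (gradf x - gradf y) \<le> L * norm (x - y)"
  shows "f (y + h) \<le> f y + gradf y \<bullet> h + L/2 * (norm h)^2"
proof -
  define \<phi> where "\<phi> t = f (y + t *\<^sub>R h) - t * (gradf y \<bullet> h) - L/2 * t^2 * (norm h)^2" for t
  define \<phi>' where "\<phi>' t = gradf (y + t *\<^sub>R h) \<bullet> h - gradf y \<bullet> h - L * t * (norm h)^2" for t
  have "DERIV \<phi> t :> \<phi>' t" for t
    unfolding \<phi>_def \<phi>'_def
    by (rule derivative_eq_intros line_deriv[OF grad] refl | simp)+
  then obtain z where z: "0 < z" "z < 1" "\<phi> 1 - \<phi> 0 = (1 - 0) * \<phi>' z"
    using MVT2[of 0 1 \<phi> \<phi>'] by auto
  have "gradf (y + z *\<^sub>R h) \<bullet> h - gradf y \<bullet> h = (gradf (y + z *\<^sub>R h) - gradf y) \<bullet> h"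
    by (simp add: inner_diff_left)
  also have "\<dots> \<le> norm (gradf (y + z *\<^sub>R h) - gradf y) * norm h"
    by (rule norm_cauchy_schwarz)
  also have "\<dots> \<le> L * norm (z *\<^sub>R h) * norm h"
    using lip[of "y + z *\<^sub>R h" y] by (intro mult_right_mono) auto
  also have "\<dots> = L * z * (norm h)^2" using z by (simp add: power2_eq_square)
  finally have "\<phi>' z \<le> 0" unfolding \<phi>'_def by simp
  then have "\<phi> 1 \<le> \<phi> 0" using z by simp
  then show ?thesis unfolding \<phi>_def by simp
qed

lemma grad_ineq:
  fixes f :: "real^'n \<Rightarrow> real"
  assumes convex: "convex_on UNIV f"
    and grad: "\<And>x. (f has_derivative (\<lambda>h. gradf x \<bullet> h)) (at x)"
  shows "f x \<ge> f y + gradf y \<bullet> (x - y)"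
proof -
  define \<phi> where "\<phi> t = f (y + t *\<^sub>R (x - y))" for t
  have cvx: "convex_on UNIV \<phi>"
  proof (rule convex_onI)
    fix t a b :: real assume "t > 0" "t < 1"
    have "y + ((1 - t) *\<^sub>R a + t *\<^sub>R b) *\<^sub>R (x - y) = (1 - t) *\<^sub>R (y + a *\<^sub>R (x - y)) + t *\<^sub>R (y + b *\<^sub>R (x - y))"
      by (simp add: algebra_simps)
    then show "\<phi> ((1 - t) *\<^sub>R a + t *\<^sub>R b) \<le> (1 - t) * \<phi> a + t * \<phi> b"
      unfolding \<phi>_def using convex_onD[OF convex, of t] \<open>t > 0\<close> \<open>t < 1\<close> by simp
  qed simp
  have "(\<phi> has_real_derivative (gradf y \<bullet> (x - y))) (at 0 within UNIV)"
    unfolding \<phi>_def using line_deriv[OF grad, of y "x - y" 0] by simp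
  from convex_on_imp_above_tangent[OF cvx _ _ _ this, of 1]
  show ?thesis unfolding \<phi>_def by simp
qed

lemma grad_min_zero:
  fixes f :: "real^'n \<Rightarrow> real"
  assumes grad: "\<And>x. (f has_derivative (\<lambda>h. gradf x \<bullet> h)) (at x)"
    and lip: "\<And>x y. norm (gradf x - gradf y) \<le> L * norm (x - y)"
    and L: "L > 0"
  shows "(norm (gradf y))^2 \<le> 2 * L * (f y - f (y - (1/L) *\<^sub>R gradf y))"
proof -
  have "f (y + (- (1/L) *\<^sub>R gradf y)) \<le> f y + gradf y \<bullet> (- (1/L) *\<^sub>R gradf y) + L/2 * (norm (- (1/L) *\<^sub>R gradf y))^2"
    by (rule descent[OF grad lip])
  also have "\<dots> = f y - (norm (gradf y))^2 / (2*L)"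
  proof -
    have "gradf y \<bullet> gradf y = (norm (gradf y))^2" by (simp add: power2_norm_eq_inner)
    then show ?thesis using L by (simp add: power2_eq_square field_simps)
  qed
  finally show ?thesis using L by (simp add: field_simps)
qed

lemma norm_diff_scale_sq:
  fixes p q :: "'a::real_inner"
  shows "(norm (p - c *\<^sub>R q))^2 = (norm p)^2 - 2*c*(p \<bullet> q) + c^2*(norm q)^2"
  by (simp only: power2_norm_eq_inner) (simp add: inner_diff_left inner_diff_right inner_commute[of q p] power2_eq_square algebra_simps)

lemma argmin_closed:
  fixes u g :: "real^'n"
  assumes L: "L > 0"
  shows "arg_min (\<lambda>z. 1/2 * (normL L (z - u))^2 + a * (g \<bullet> z)) (\<lambda>_. True) = u - (a/L) *\<^sub>R g"
proof -
  define q where "q z = 1/2 * (normL L (z - u))^2 + a * (g \<bullet> z)" for z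
  define w where "w = u - (a/L) *\<^sub>R g"
  have key: "q z = q w + L/2 * (norm (z - w))^2" for z
  proof -
    have zu: "z - u = (z - w) - (a/L) *\<^sub>R g" unfolding w_def by simp
    have hz: "(norm (z - u))^2 = (norm (z - w))^2 - 2 * (a/L) * (z \<bullet> g - w \<bullet> g) + (a/L)^2 * (norm g)^2"
      unfolding zu norm_diff_scale_sq inner_diff_left ..
    have "w - u = - (a/L) *\<^sub>R g" unfolding w_def by simp
    then have hw: "(norm (w - u))^2 = (a/L)^2 * (norm g)^2"
      by (simp add: power2_norm_eq_inner power2_eq_square)
    have c1: "g \<bullet> z = z \<bullet> g" "g \<bullet> w = w \<bullet> g" by (simp_all add: inner_commute)
    have alg: "\<And>N Z W G. 1/2*(L*(N - 2*(a/L)*(Z - W) + (a/L)^2*G)) + a*Z = 1/2*(L*((a/L)^2*G)) + a*W + L/2*N"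
      using L by (simp add: field_simps power2_eq_square)
    show ?thesis unfolding q_def normL_sq[of L, OF less_imp_le[OF L]] hz hw c1
      by (rule alg[of "(norm (z - w))^2" "z \<bullet> g" "w \<bullet> g" "(norm g)^2"])
  qed
  have "q (arg_min q (\<lambda>_. True)) = q w"
  proof (rule arg_min_equality)
    fix x :: "real^'n"
    have "q x = q w + L/2 * (norm (x - w))^2" by (rule key)
    moreover have "L/2 * (norm (x - w))^2 \<ge> 0" using L by simp
    ultimately show "q w \<le> q x" by linarith
  qed simp
  moreover have "q (arg_min q (\<lambda>_. True)) = q w + L/2 * (norm (arg_min q (\<lambda>_. True) - w))^2" by (rule key)
  ultimately have "norm (arg_min q (\<lambda>_. True) - w) = 0" using L by simp
  then show ?thesis unfolding q_def[abs_def] w_def by simp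
qed

lemma card_pos': "real CARD('n::finite) \<ge> 1"
  using card_ge_0_finite[of "UNIV::'n set"] by simp

lemma mtm_A_Suc: "mtm_A n (Suc k) = mtm_A n k + mtm_alpha n (Suc k)"
  unfolding mtm_A_def by simp

lemma mtm_A_closed:
  assumes "n \<ge> 1"
  shows "mtm_A n k = ((real k + 2*real n)^2 - real k - 4*real n) / (4*(real n)^2)"
proof (induction k)
  case 0
  then show ?case using assms by (simp add: mtm_A_def field_simps power2_eq_square)
next
  case (Suc k)
  have "mtm_A n (Suc k) = ((real k + 2*real n)^2 - real k - 4*real n) / (4*(real n)^2) + mtm_alpha n (Suc k)"
    by (simp only: mtm_A_Suc Suc.IH)
  also have "\<dots> = ((real (Suc k) + 2*real n)^2 - real (Suc k) - 4*real n) / (4*(real n)^2)"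
    using assms by (simp add: field_simps power2_eq_square)
  finally show ?case .
qed

lemma mtm_alpha_pos: "n \<ge> 1 \<Longrightarrow> mtm_alpha n (Suc k) > 0"
  by simp

lemma mtm_A_nonneg: "n \<ge> 1 \<Longrightarrow> mtm_A n k \<ge> 0"
  unfolding mtm_A_def
proof (intro sum_nonneg)
  fix j assume "n \<ge> 1" 
  then show "mtm_alpha n j \<ge> 0" by (cases j) (auto simp: field_simps)
qed

lemma mtm_A_Suc_pos: "n \<ge> 1 \<Longrightarrow> mtm_A n (Suc k) > 0"
  using mtm_A_nonneg[of n k] mtm_alpha_pos[of n k] unfolding mtm_A_Suc by linarith

lemma mtm_alpha_sq_le:
  assumes "n \<ge> 1"
  shows "(real n)^2 * (mtm_alpha n (Suc k))^2 \<le> mtm_A n (Suc k)"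
proof -
  have "(real n)^2 * (mtm_alpha n (Suc k))^2 = (real k + 2*real n)^2 / (4*(real n)^2)"
    using assms by (simp add: field_simps power2_eq_square)
  also have "\<dots> \<le> ((real (Suc k) + 2*real n)^2 - real (Suc k) - 4*real n) / (4*(real n)^2)"
    using assms by (intro divide_right_mono) (auto simp: power2_eq_square algebra_simps)
  finally show ?thesis using mtm_A_closed[OF assms] by simp
qed

definition yk :: "nat \<Rightarrow> nat \<Rightarrow> real^'n \<Rightarrow> real^'n \<Rightarrow> real^'n" where
  "yk n k x u = (1 / mtm_A n (Suc k)) *\<^sub>R (mtm_alpha n (Suc k) *\<^sub>R u + mtm_A n k *\<^sub>R x)"

lemma mtm_step_eq:
  fixes gradf :: "real^'n \<Rightarrow> real^'n"
  assumes L: "L > 0"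
  shows "mtm_step L gradf k (x,u) e d =
    (yk CARD('n) k x u - (real CARD('n) * mtm_alpha CARD('n) (Suc k) / mtm_A CARD('n) (Suc k)) *\<^sub>R
         ((mtm_alpha CARD('n) (Suc k) / L) *\<^sub>R ((real CARD('n) * (gradf (yk CARD('n) k x u) \<bullet> e + d)) *\<^sub>R e)),
     u - (mtm_alpha CARD('n) (Suc k) / L) *\<^sub>R ((real CARD('n) * (gradf (yk CARD('n) k x u) \<bullet> e + d)) *\<^sub>R e))"
  unfolding mtm_step_def Let_def argmin_closed[OF L] yk_def by simp

lemma step_ineq:
  fixes f :: "real^'n \<Rightarrow> real" and gradf :: "real^'n \<Rightarrow> real^'n" and x u e z :: "real^'n" and k :: nat and d :: real
  assumes L: "L > 0" and convex: "convex_on UNIV f"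
    and grad: "\<And>x. (f has_derivative (\<lambda>h. gradf x \<bullet> h)) (at x)"
    and lip: "\<And>x y. norm (gradf x - gradf y) \<le> L * norm (x - y)"
    and e1: "norm e = 1"
  defines "n \<equiv> real CARD('n)" and "\<alpha> \<equiv> mtm_alpha CARD('n) (Suc k)" and "A \<equiv> mtm_A CARD('n) k"
    and "A' \<equiv> mtm_A CARD('n) (Suc k)" and "y \<equiv> yk CARD('n) k x u"
  shows "A' * (f (fst (mtm_step L gradf k (x,u) e d)) - f z) + L/2 * (norm (snd (mtm_step L gradf k (x,u) e d) - z))^2
     \<le> A * (f x - f z) + L/2 * (norm (u - z))^2
        + (\<alpha> * (gradf y \<bullet> (u - z)) - \<alpha> * n * (gradf y \<bullet> e) * (e \<bullet> (u - z)))
        - \<alpha> * n * d * (e \<bullet> (u - z)) + (n^2 * \<alpha>^2 / L) * (gradf y \<bullet> e + d) * d"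
proof -
  define B where "B = n^2 * \<alpha>^2 / L"
  define s where "s = gradf y \<bullet> e"
  define t where "t = s + d"
  define w where "w = u - z"
  have n1: "CARD('n) \<ge> 1" using card_pos'[where 'n='n] by simp
  have Apos: "A' > 0" unfolding A'_def using mtm_A_Suc_pos[OF n1] .
  have A0: "A \<ge> 0" unfolding A_def using mtm_A_nonneg[OF n1] .
  have a0: "\<alpha> > 0" unfolding \<alpha>_def using mtm_alpha_pos[OF n1] .
  have AA: "A' = A + \<alpha>" unfolding A'_def A_def \<alpha>_def by (rule mtm_A_Suc)
  have LB: "L * B \<le> A'" unfolding B_def using mtm_alpha_sq_le[OF n1, of k] L
    by (simp add: n_def \<alpha>_def A'_def)
  have B0: "B \<ge> 0" unfolding B_def using L by simp
  define u' where "u' = u - (\<alpha> * n * t / L) *\<^sub>R e"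
  define x' where "x' = y - (B * t / A') *\<^sub>R e"
  have st: "mtm_step L gradf k (x,u) e d = (x', u')"
  proof -
    have r1: "(\<alpha> / L) *\<^sub>R ((n * (gradf y \<bullet> e + d)) *\<^sub>R e) = (\<alpha> * n * t / L) *\<^sub>R e"
      by (simp add: t_def s_def)
    have "(n * \<alpha> / A') * (\<alpha> * n * t / L) = B * t / A'"
      unfolding B_def by (simp add: power2_eq_square ac_simps)
    then have r2: "(n * \<alpha> / A') *\<^sub>R ((\<alpha> * n * t / L) *\<^sub>R e) = (B * t / A') *\<^sub>R e"
      by simp
    show ?thesis unfolding mtm_step_eq[OF L] y_def[symmetric] \<alpha>_def[symmetric] A'_def[symmetric] n_def[symmetric]
      r1 r2 x'_def u'_def ..
  qed
  have h1: "f x' \<le> f y - (B * t / A') * s + L/2 * (B * t / A')^2"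
  proof -
    have "f (y + (- (B * t / A') *\<^sub>R e)) \<le> f y + gradf y \<bullet> (- (B * t / A') *\<^sub>R e) + L/2 * (norm (- (B * t / A') *\<^sub>R e))^2"
      by (rule descent[OF grad lip])
    then show ?thesis unfolding x'_def s_def using e1 by (simp add: power2_eq_square)
  qed
  have h3: "A' * (f x' - f y) \<le> - B * t * s + B * t^2 / 2"
  proof -
    have "A' * (f x' - f y) \<le> A' * (- (B * t / A') * s + L/2 * (B * t / A')^2)"
      using h1 Apos by (intro mult_left_mono) auto
    also have "\<dots> = - B * t * s + (L * B / A') * (B * t^2) / 2"
      using Apos by (simp add: field_simps power2_eq_square)
    also have "(L * B / A') * (B * t^2) / 2 \<le> 1 * (B * t^2) / 2"
      using LB Apos B0 by (intro divide_right_mono mult_right_mono) (auto simp: field_simps)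
    finally show ?thesis by simp
  qed
  have h4: "L/2 * (norm (u' - z))^2 = L/2 * (norm w)^2 - \<alpha> * n * t * (w \<bullet> e) + B * t^2 / 2"
  proof -
    have "u' - z = w - (\<alpha> * n * t / L) *\<^sub>R e" unfolding u'_def w_def by simp
    then have "(norm (u' - z))^2 = (norm w)^2 - 2 * (\<alpha> * n * t / L) * (w \<bullet> e) + (\<alpha> * n * t / L)^2"
      using norm_diff_scale_sq[of w "\<alpha> * n * t / L" e] e1 by simp
    then show ?thesis unfolding B_def using L by (simp add: field_simps power2_eq_square)
  qed
  have h5: "A' * (f y - f z) \<le> A * (f x - f z) + \<alpha> * (gradf y \<bullet> w)"
  proof -
    have gx: "f x \<ge> f y + gradf y \<bullet> (x - y)" by (rule grad_ineq[OF convex grad])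
    have gz: "f z \<ge> f y + gradf y \<bullet> (z - y)" by (rule grad_ineq[OF convex grad])
    have Ay: "A' *\<^sub>R y = \<alpha> *\<^sub>R u + A *\<^sub>R x"
      unfolding y_def yk_def A'_def[symmetric] \<alpha>_def[symmetric] A_def[symmetric] using Apos by simp
    have "A *\<^sub>R (x - y) + \<alpha> *\<^sub>R (z - y) = A *\<^sub>R x + \<alpha> *\<^sub>R z - (A + \<alpha>) *\<^sub>R y"
      by (simp add: algebra_simps)
    also have "\<dots> = - \<alpha> *\<^sub>R w" using Ay unfolding AA[symmetric] w_def by (simp add: algebra_simps)
    finally have v: "A *\<^sub>R (x - y) + \<alpha> *\<^sub>R (z - y) = - \<alpha> *\<^sub>R w" .
    have "A * (gradf y \<bullet> (x - y)) + \<alpha> * (gradf y \<bullet> (z - y)) = gradf y \<bullet> (A *\<^sub>R (x - y) + \<alpha> *\<^sub>R (z - y))"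
      by (simp add: inner_add_right)
    also have "\<dots> = - \<alpha> * (gradf y \<bullet> w)" unfolding v by simp
    finally have v2: "A * (gradf y \<bullet> (x - y)) + \<alpha> * (gradf y \<bullet> (z - y)) = - \<alpha> * (gradf y \<bullet> w)" .
    have "A * f y \<le> A * (f x - gradf y \<bullet> (x - y))" using gx A0 by (intro mult_left_mono) auto
    moreover have "\<alpha> * f y \<le> \<alpha> * (f z - gradf y \<bullet> (z - y))" using gz a0 by (intro mult_left_mono) auto
    ultimately show ?thesis unfolding AA using v2 by (simp add: algebra_simps)
  qed
  have e3: "B * t^2 - B * t * s = B * (s + d) * d" unfolding t_def by (simp add: algebra_simps power2_eq_square)
  have e4: "\<alpha> * n * t * (w \<bullet> e) = \<alpha> * n * s * (e \<bullet> w) + \<alpha> * n * d * (e \<bullet> w)"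
    unfolding t_def by (simp add: algebra_simps inner_commute)
  have "A' * (f x' - f z) = A' * (f x' - f y) + A' * (f y - f z)" by (simp add: algebra_simps)
  with h3 h4 h5 e3 e4 have "A' * (f x' - f z) + L/2 * (norm (u' - z))^2
      \<le> A * (f x - f z) + L/2 * (norm w)^2 + (\<alpha> * (gradf y \<bullet> w) - \<alpha> * n * s * (e \<bullet> w)) - \<alpha> * n * d * (e \<bullet> w) + B * (s + d) * d"
    by linarith
  then show ?thesis unfolding st w_def s_def B_def by simp
qed

lemma lip_cont:
  fixes gradf :: "real^'n \<Rightarrow> real^'n"
  assumes lip: "\<And>x y. norm (gradf x - gradf y) \<le> L * norm (x - y)" and L: "L > 0"
  shows "continuous_on UNIV gradf"
  unfolding continuous_on_iff
proof (intro ballI allI impI)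
  fix x :: "real^'n" and \<epsilon> :: real assume "\<epsilon> > 0"
  show "\<exists>d>0. \<forall>x'\<in>UNIV. dist x' x < d \<longrightarrow> dist (gradf x') (gradf x) < \<epsilon>"
  proof (intro exI[of _ "\<epsilon>/L"] conjI ballI impI)
    show "\<epsilon>/L > 0" using \<open>\<epsilon> > 0\<close> L by simp
    fix x' assume "dist x' x < \<epsilon>/L"
    then have "L * dist x' x < \<epsilon>" using L by (simp add: field_simps)
    moreover have "dist (gradf x') (gradf x) \<le> L * dist x' x" using lip[of x' x] by (simp add: dist_norm)
    ultimately show "dist (gradf x') (gradf x) < \<epsilon>" by linarith
  qed
qed

lemma (in prob_space) abs_integral_le_sqrt:
  fixes g :: "'a \<Rightarrow> real"
  assumes "integrable M g" "integrable M (\<lambda>x. (g x)^2)"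
  shows "(\<integral>x. \<bar>g x\<bar> \<partial>M) \<le> sqrt (\<integral>x. (g x)^2 \<partial>M)"
proof -
  define c where "c = (\<integral>x. \<bar>g x\<bar> \<partial>M)"
  have ia: "integrable M (\<lambda>x. \<bar>g x\<bar>)" using assms(1) by simp
  have "0 \<le> (\<integral>x. (\<bar>g x\<bar> - c)^2 \<partial>M)" by simp
  also have "(\<integral>x. (\<bar>g x\<bar> - c)^2 \<partial>M) = (\<integral>x. (g x)^2 - 2 * c * \<bar>g x\<bar> + c^2 \<partial>M)"
    by (rule Bochner_Integration.integral_cong) (auto simp: power2_eq_square algebra_simps)
  also have "\<dots> = (\<integral>x. (g x)^2 \<partial>M) - 2 * c * c + c^2"
    using assms ia by (simp add: c_def prob_space)
  finally have "c^2 \<le> (\<integral>x. (g x)^2 \<partial>M)" by (simp add: power2_eq_square)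
  then show ?thesis unfolding c_def by (rule real_le_rsqrt)
qed

locale mtm_setup =
  fixes f :: "real^'n \<Rightarrow> real" and gradf :: "real^'n \<Rightarrow> real^'n"
    and L :: real and xstar x0 :: "real^'n"
    and M :: "'a measure" and F :: "nat \<Rightarrow> 'a measure"
    and e :: "nat \<Rightarrow> 'a \<Rightarrow> real^'n" and dl :: "nat \<Rightarrow> 'a \<Rightarrow> real"
    and \<delta> :: real
  assumes L_pos: "L > 0"
    and convex: "convex_on UNIV f"
    and grad: "\<And>x. (f has_derivative (\<lambda>h. gradf x \<bullet> h)) (at x)"
    and lip: "\<And>x y. norm (gradf x - gradf y) \<le> L * norm (x - y)"
    and min: "\<And>x. f xstar \<le> f x"
    and prob: "prob_space M"
    and subalg: "\<And>k. subalgebra M (F k)"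
    and filt: "\<And>k. sets (F k) \<subseteq> sets (F (Suc k))"
    and e_meas: "\<And>k. e (Suc k) \<in> borel_measurable (F (Suc k))"
    and dl_meas: "\<And>k. dl (Suc k) \<in> borel_measurable (F (Suc k))"
    and e_unit: "\<And>k \<omega>. \<omega> \<in> space M \<Longrightarrow> norm (e (Suc k) \<omega>) = 1"
    and e_cond: "\<And>k i j. AE \<omega> in M.
        real_cond_exp M (F k) (\<lambda>\<omega>. e (Suc k) \<omega> $ i * e (Suc k) \<omega> $ j) \<omega>
          = (if i = j then 1 / real CARD('n) else 0)"
    and dl_bound: "\<And>k \<omega>. \<omega> \<in> space M \<Longrightarrow> \<bar>dl (Suc k) \<omega>\<bar> \<le> \<delta>"
begin

definition "st k \<omega> = mtm L gradf x0 (\<lambda>k. e k \<omega>) (\<lambda>k. dl k \<omega>) k"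
definition "X k \<omega> = fst (st k \<omega>)"
definition "U k \<omega> = snd (st k \<omega>)"
definition "Y k \<omega> = yk CARD('n) k (X k \<omega>) (U k \<omega>)"
definition "Phi k \<omega> = mtm_A CARD('n) k * (f (X k \<omega>) - f xstar) + L/2 * (norm (U k \<omega> - xstar))^2"

lemma n1: "CARD('n) \<ge> 1" using card_pos'[where 'n='n] by simp

lemma st_Suc: "st (Suc k) \<omega> = mtm_step L gradf k (X k \<omega>, U k \<omega>) (e (Suc k) \<omega>) (dl (Suc k) \<omega>)"
  unfolding st_def X_def U_def by simp

abbreviation "gk k \<omega> \<equiv> (real CARD('n) * (gradf (Y k \<omega>) \<bullet> e (Suc k) \<omega> + dl (Suc k) \<omega>)) *\<^sub>R e (Suc k) \<omega>"

lemma U_Suc: "U (Suc k) \<omega> = U k \<omega> - (mtm_alpha CARD('n) (Suc k) / L) *\<^sub>R gk k \<omega>"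
  unfolding U_def[of "Suc k"] st_Suc mtm_step_eq[OF L_pos] Y_def by simp

lemma X_Suc: "X (Suc k) \<omega> = Y k \<omega> - (real CARD('n) * mtm_alpha CARD('n) (Suc k) / mtm_A CARD('n) (Suc k)) *\<^sub>R
         ((mtm_alpha CARD('n) (Suc k) / L) *\<^sub>R gk k \<omega>)"
  unfolding X_def[of "Suc k"] st_Suc mtm_step_eq[OF L_pos] Y_def by simp

lemma X0: "X 0 \<omega> = x0" and U0: "U 0 \<omega> = x0"
  unfolding X_def U_def st_def by simp_all

lemma space_F: "space (F k) = space M"
  using subalg[of k] by (simp add: subalgebra_def)

lemma sub_next: "subalgebra (F (Suc k)) (F k)"
  unfolding subalgebra_def using filt[of k] space_F by simp

lemma gradf_meas[measurable]: "gradf \<in> borel_measurable borel"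
  by (rule borel_measurable_continuous_onI[OF lip_cont[OF lip L_pos]])

lemma f_cont: "continuous_on UNIV f"
  by (intro continuous_at_imp_continuous_on ballI has_derivative_continuous[OF grad])

lemma f_meas[measurable]: "f \<in> borel_measurable borel"
  by (rule borel_measurable_continuous_onI[OF f_cont])

lemma nth_meas[measurable]: "(\<lambda>x::real^'n. x $ i) \<in> borel_measurable borel"
  by (intro borel_measurable_continuous_onI continuous_on_component continuous_on_id)

lemma meas_XU: "X k \<in> borel_measurable (F k) \<and> U k \<in> borel_measurable (F k)"
proof (induction k)
  case 0
  then show ?case by (simp add: X0 U0[abs_def] X_def[symmetric])
next
  case (Suc k)
  have [measurable]: "X k \<in> borel_measurable (F (Suc k))" "U k \<in> borel_measurable (F (Suc k))"
    using Suc measurable_from_subalg[OF sub_next] by blast+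
  have [measurable]: "e (Suc k) \<in> borel_measurable (F (Suc k))" "dl (Suc k) \<in> borel_measurable (F (Suc k))"
    by (rule e_meas dl_meas)+
  have [measurable]: "Y k \<in> borel_measurable (F (Suc k))"
    unfolding Y_def[abs_def] yk_def by measurable
  show ?case unfolding X_Suc[abs_def] U_Suc[abs_def] by measurable
qed

end

lemma gradz_zero:
  fixes f :: "real^'n \<Rightarrow> real"
  assumes grad: "\<And>x. (f has_derivative (\<lambda>h. gradf x \<bullet> h)) (at x)"
    and lip: "\<And>x y. norm (gradf x - gradf y) \<le> L * norm (x - y)"
    and L: "L > 0" and min: "\<And>x. f z \<le> f x"
  shows "gradf z = 0"
proof -
  have "(norm (gradf z))^2 \<le> 2 * L * (f z - f (z - (1/L) *\<^sub>R gradf z))"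
    by (rule grad_min_zero[OF grad lip L])
  also have "\<dots> \<le> 0" using min[of "z - (1/L) *\<^sub>R gradf z"] L by (simp add: mult_nonneg_nonpos)
  finally show ?thesis by simp
qed

lemma f_upper:
  fixes f :: "real^'n \<Rightarrow> real"
  assumes grad: "\<And>x. (f has_derivative (\<lambda>h. gradf x \<bullet> h)) (at x)"
    and lip: "\<And>x y. norm (gradf x - gradf y) \<le> L * norm (x - y)"
    and gz: "gradf z = 0"
  shows "f v - f z \<le> L/2 * (norm (v - z))^2"
  using descent[OF grad lip, of z "v - z"] gz by simp

context mtm_setup begin

definition bdd :: "('a \<Rightarrow> real) \<Rightarrow> bool" where "bdd g \<longleftrightarrow> (\<exists>K. \<forall>\<omega>\<in>space M. \<bar>g \<omega>\<bar> \<le> K)"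
definition "vbdd (V :: 'a \<Rightarrow> real^'n) \<longleftrightarrow> (\<exists>K. \<forall>\<omega>\<in>space M. norm (V \<omega>) \<le> K)"

lemma gz: "gradf xstar = 0" by (rule gradz_zero[OF grad lip L_pos min])

lemma bdd_const[intro]: "bdd (\<lambda>\<omega>. c)" unfolding bdd_def by (intro exI[of _ "\<bar>c\<bar>"]) auto

lemma bdd_add[intro]: assumes "bdd g" "bdd h" shows "bdd (\<lambda>\<omega>. g \<omega> + h \<omega>)"
proof -
  obtain K1 K2 where 1: "\<forall>\<omega>\<in>space M. \<bar>g \<omega>\<bar> \<le> K1" and 2: "\<forall>\<omega>\<in>space M. \<bar>h \<omega>\<bar> \<le> K2"
    using assms unfolding bdd_def by blast
  have "\<forall>\<omega>\<in>space M. \<bar>g \<omega> + h \<omega>\<bar> \<le> K1 + K2"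
    using 1 2 by (auto intro: order_trans[OF abs_triangle_ineq] add_mono)
  then show ?thesis unfolding bdd_def by blast
qed

lemma bdd_diff[intro]: assumes "bdd g" "bdd h" shows "bdd (\<lambda>\<omega>. g \<omega> - h \<omega>)"
proof -
  obtain K1 K2 where 1: "\<forall>\<omega>\<in>space M. \<bar>g \<omega>\<bar> \<le> K1" and 2: "\<forall>\<omega>\<in>space M. \<bar>h \<omega>\<bar> \<le> K2"
    using assms unfolding bdd_def by blast
  have "\<forall>\<omega>\<in>space M. \<bar>g \<omega> - h \<omega>\<bar> \<le> K1 + K2"
    using 1 2 by (auto intro: order_trans[OF abs_triangle_ineq4] add_mono)
  then show ?thesis unfolding bdd_def by blast
qed

lemma bdd_mult[intro]: assumes "bdd g" "bdd h" shows "bdd (\<lambda>\<omega>. g \<omega> * h \<omega>)"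
proof -
  obtain K1 K2 where 1: "\<forall>\<omega>\<in>space M. \<bar>g \<omega>\<bar> \<le> K1" and 2: "\<forall>\<omega>\<in>space M. \<bar>h \<omega>\<bar> \<le> K2"
    using assms unfolding bdd_def by blast
  have "\<forall>\<omega>\<in>space M. \<bar>g \<omega> * h \<omega>\<bar> \<le> K1 * K2"
    using 1 2 by (auto simp: abs_mult intro!: mult_mono order_trans[OF abs_ge_zero])
  then show ?thesis unfolding bdd_def by blast
qed

lemma bdd_abs[intro]: assumes "bdd g" shows "bdd (\<lambda>\<omega>. \<bar>g \<omega>\<bar>)"
  using assms unfolding bdd_def by simp

lemma bdd_pow2[intro]: "bdd g \<Longrightarrow> bdd (\<lambda>\<omega>. (g \<omega>)^2)"
  unfolding power2_eq_square by (rule bdd_mult)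

lemma bdd_norm[intro]: assumes "vbdd V" shows "bdd (\<lambda>\<omega>. norm (V \<omega>))"
  using assms unfolding bdd_def vbdd_def by simp

lemma bdd_inner[intro]: assumes "vbdd V" "vbdd W" shows "bdd (\<lambda>\<omega>. V \<omega> \<bullet> W \<omega>)"
proof -
  obtain K1 K2 where 1: "\<forall>\<omega>\<in>space M. norm (V \<omega>) \<le> K1" and 2: "\<forall>\<omega>\<in>space M. norm (W \<omega>) \<le> K2"
    using assms unfolding vbdd_def by blast
  have "\<forall>\<omega>\<in>space M. \<bar>V \<omega> \<bullet> W \<omega>\<bar> \<le> K1 * K2"
    using 1 2 by (auto intro!: order_trans[OF Cauchy_Schwarz_ineq2] mult_mono order_trans[OF norm_ge_zero])
  then show ?thesis unfolding bdd_def by blast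
qed

lemma bdd_nth[intro]: assumes "vbdd V" shows "bdd (\<lambda>\<omega>. V \<omega> $ i)"
proof -
  obtain K1 where 1: "\<forall>\<omega>\<in>space M. norm (V \<omega>) \<le> K1"
    using assms unfolding vbdd_def by blast
  have "\<forall>\<omega>\<in>space M. \<bar>V \<omega> $ i\<bar> \<le> K1"
    using 1 by (auto intro: order_trans[OF component_le_norm_cart])
  then show ?thesis unfolding bdd_def by blast
qed

lemma vbdd_const[intro]: "vbdd (\<lambda>\<omega>. c)" unfolding vbdd_def by (intro exI[of _ "norm c"]) auto

lemma vbdd_add[intro]: assumes "vbdd g" "vbdd h" shows "vbdd (\<lambda>\<omega>. g \<omega> + h \<omega>)"
proof -
  obtain K1 K2 where 1: "\<forall>\<omega>\<in>space M. norm (g \<omega>) \<le> K1" and 2: "\<forall>\<omega>\<in>space M. norm (h \<omega>) \<le> K2"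
    using assms unfolding vbdd_def by blast
  have "\<forall>\<omega>\<in>space M. norm (g \<omega> + h \<omega>) \<le> K1 + K2"
    using 1 2 by (auto intro: order_trans[OF norm_triangle_ineq] add_mono)
  then show ?thesis unfolding vbdd_def by blast
qed

lemma vbdd_diff[intro]: assumes "vbdd g" "vbdd h" shows "vbdd (\<lambda>\<omega>. g \<omega> - h \<omega>)"
proof -
  obtain K1 K2 where 1: "\<forall>\<omega>\<in>space M. norm (g \<omega>) \<le> K1" and 2: "\<forall>\<omega>\<in>space M. norm (h \<omega>) \<le> K2"
    using assms unfolding vbdd_def by blast
  have "\<forall>\<omega>\<in>space M. norm (g \<omega> - h \<omega>) \<le> K1 + K2"
    using 1 2 by (auto intro: order_trans[OF norm_triangle_ineq4] add_mono)
  then show ?thesis unfolding vbdd_def by blast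
qed

lemma vbdd_scale[intro]: assumes "bdd c" "vbdd V" shows "vbdd (\<lambda>\<omega>. c \<omega> *\<^sub>R V \<omega>)"
proof -
  obtain K1 K2 where 1: "\<forall>\<omega>\<in>space M. \<bar>c \<omega>\<bar> \<le> K1" and 2: "\<forall>\<omega>\<in>space M. norm (V \<omega>) \<le> K2"
    using assms unfolding vbdd_def bdd_def by blast
  have "\<forall>\<omega>\<in>space M. norm (c \<omega> *\<^sub>R V \<omega>) \<le> K1 * K2"
  proof
    fix \<omega> assume w: "\<omega> \<in> space M"
    have "norm (c \<omega> *\<^sub>R V \<omega>) = \<bar>c \<omega>\<bar> * norm (V \<omega>)" by simp
    also have "\<dots> \<le> K1 * K2" using 1 2 w by (intro mult_mono) (auto intro: order_trans[OF abs_ge_zero])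
    finally show "norm (c \<omega> *\<^sub>R V \<omega>) \<le> K1 * K2" .
  qed
  then show ?thesis unfolding vbdd_def by blast
qed

lemma vbdd_gradf[intro]: "vbdd V \<Longrightarrow> vbdd (\<lambda>\<omega>. gradf (V \<omega>))"
proof -
  assume "vbdd V"
  then have "bdd (\<lambda>\<omega>. L * norm (V \<omega> - xstar))" by (intro bdd_mult bdd_const bdd_norm vbdd_diff vbdd_const)
  moreover have "norm (gradf v) \<le> L * norm (v - xstar)" for v using lip[of v xstar] gz by simp
  ultimately show ?thesis unfolding bdd_def vbdd_def by (meson order_trans abs_ge_self)
qed

lemma bdd_f[intro]: "vbdd V \<Longrightarrow> bdd (\<lambda>\<omega>. f (V \<omega>))"
proof -
  assume "vbdd V"
  then have "bdd (\<lambda>\<omega>. \<bar>f xstar\<bar> + L/2 * (norm (V \<omega> - xstar))^2)"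
    by (intro bdd_add bdd_mult bdd_const bdd_pow2 bdd_norm vbdd_diff vbdd_const)
  moreover have "\<bar>f v\<bar> \<le> \<bar>f xstar\<bar> + L/2 * (norm (v - xstar))^2" for v
    using f_upper[OF grad lip gz, of v] min[of v] by linarith
  ultimately show ?thesis unfolding bdd_def by (meson order_trans abs_ge_self)
qed

lemmas bdd_rules = bdd_add bdd_diff bdd_mult bdd_pow2 bdd_abs bdd_norm bdd_inner bdd_nth bdd_const
  vbdd_add vbdd_diff vbdd_scale vbdd_gradf vbdd_const

lemma vbdd_e[intro]: "vbdd (e (Suc k))" unfolding vbdd_def using e_unit by auto
lemma bdd_dl[intro]: "bdd (dl (Suc k))" unfolding bdd_def using dl_bound by auto

lemma yk_norm:
  assumes "norm x \<le> C" "norm u \<le> C"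
  shows "norm (yk CARD('n) k x u) \<le> C"
proof -
  let ?a = "mtm_alpha CARD('n) (Suc k)" and ?A = "mtm_A CARD('n) k" and ?A' = "mtm_A CARD('n) (Suc k)"
  have pos: "?A' > 0" "?a > 0" "?A \<ge> 0" using mtm_A_Suc_pos[OF n1] mtm_alpha_pos[OF n1] mtm_A_nonneg[OF n1] by auto
  have "norm (?a *\<^sub>R u + ?A *\<^sub>R x) \<le> norm (?a *\<^sub>R u) + norm (?A *\<^sub>R x)" by (rule norm_triangle_ineq)
  also have "\<dots> = ?a * norm u + ?A * norm x" using pos by simp
  finally have t: "norm (?a *\<^sub>R u + ?A *\<^sub>R x) \<le> ?a * norm u + ?A * norm x" .
  have "norm (yk CARD('n) k x u) = (1/?A') * norm (?a *\<^sub>R u + ?A *\<^sub>R x)"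
    unfolding yk_def using pos by simp
  also have "\<dots> \<le> (1/?A') * (?a * norm u + ?A * norm x)"
    using pos t by (intro mult_left_mono) auto
  also have "\<dots> \<le> (1/?A') * (?a * C + ?A * C)"
    using pos assms by (intro mult_left_mono add_mono) auto
  also have "\<dots> = C" using pos mtm_A_Suc[of "CARD('n)" k] by (simp add: field_simps)
  finally show ?thesis .
qed

lemma vbdd_XU: "vbdd (X k) \<and> vbdd (U k)"
proof (induction k)
  case 0
  then show ?case unfolding X0[abs_def] U0[abs_def] by auto
next
  case (Suc k)
  then have vX: "vbdd (X k)" and vU: "vbdd (U k)" by auto
  have vY: "vbdd (Y k)"
  proof -
    obtain C1 C2 where "\<forall>\<omega>\<in>space M. norm (X k \<omega>) \<le> C1" "\<forall>\<omega>\<in>space M. norm (U k \<omega>) \<le> C2"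
      using vX vU unfolding vbdd_def by auto
    then show ?thesis unfolding vbdd_def Y_def
      by (auto intro!: exI[of _ "max C1 C2"] yk_norm)
  qed
  show ?case unfolding X_Suc[abs_def] U_Suc[abs_def] using vY vU
    by (intro conjI bdd_rules bdd_f vbdd_e bdd_dl bdd_f)
qed

lemma vbdd_X[intro]: "vbdd (X k)" and vbdd_U[intro]: "vbdd (U k)" using vbdd_XU by auto

lemma vbdd_Y[intro]: "vbdd (Y k)"
proof -
  obtain C1 C2 where "\<forall>\<omega>\<in>space M. norm (X k \<omega>) \<le> C1" "\<forall>\<omega>\<in>space M. norm (U k \<omega>) \<le> C2"
    using vbdd_X vbdd_U unfolding vbdd_def by metis
  then show ?thesis unfolding vbdd_def Y_def
    by (auto intro!: exI[of _ "max C1 C2"] yk_norm)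
qed

lemma intg: assumes "g \<in> borel_measurable M" "bdd g" shows "integrable M g"
proof -
  obtain K where K: "\<forall>\<omega>\<in>space M. \<bar>g \<omega>\<bar> \<le> K" using assms(2) unfolding bdd_def by blast
  have "AE x in M. norm (g x) \<le> K" using K by (auto intro!: AE_I2)
  then show ?thesis
    using finite_measure.integrable_const_bound[OF prob_space.finite_measure[OF prob] _ assms(1)] by blast
qed

lemma measM_XU[measurable]: "X k \<in> borel_measurable M" "U k \<in> borel_measurable M"
  using meas_XU measurable_from_subalg[OF subalg] by blast+

lemma measM_e[measurable]: "e (Suc k) \<in> borel_measurable M" "dl (Suc k) \<in> borel_measurable M"
  using e_meas dl_meas measurable_from_subalg[OF subalg] by blast+

lemma measF_Y[measurable]: "Y k \<in> borel_measurable (F k)"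
proof -
  have [measurable]: "X k \<in> borel_measurable (F k)" "U k \<in> borel_measurable (F k)" using meas_XU by auto
  show ?thesis unfolding Y_def[abs_def] yk_def by measurable
qed

lemma measM_Y[measurable]: "Y k \<in> borel_measurable M"
  using measF_Y measurable_from_subalg[OF subalg] by blast

lemma sfs: "sigma_finite_subalgebra M (F k)"
proof -
  have "finite_measure (restr_to_subalg M (F k))"
    by (rule finite_measure_restr_to_subalg[OF subalg prob_space.finite_measure[OF prob]])
  then show ?thesis unfolding sigma_finite_subalgebra_def using subalg
    by (simp add: finite_measure_def)
qed

end

context mtm_setup begin

lemma inner_expand:
  fixes v w a :: "real^'n"
  shows "(v \<bullet> a) * (a \<bullet> w) = (\<Sum>i\<in>UNIV. \<Sum>j\<in>UNIV. (v $ i * w $ j) * (a $ i * a $ j))"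
  unfolding inner_vec_def sum_product by (simp add: ac_simps)

lemma moment:
  assumes mV[measurable]: "V \<in> borel_measurable (F k)" and mW[measurable]: "W \<in> borel_measurable (F k)"
    and bV: "vbdd V" and bW: "vbdd W"
  shows "(\<integral>\<omega>. (V \<omega> \<bullet> e (Suc k) \<omega>) * (e (Suc k) \<omega> \<bullet> W \<omega>) \<partial>M) = (\<integral>\<omega>. V \<omega> \<bullet> W \<omega> \<partial>M) / real CARD('n)"
proof -
  interpret sf: sigma_finite_subalgebra M "F k" by (rule sfs)
  have [measurable]: "V \<in> borel_measurable M" "W \<in> borel_measurable M"
    using measurable_from_subalg[OF subalg] mV mW by blast+
  let ?E = "e (Suc k)"
  have int_ij: "integrable M (\<lambda>\<omega>. (V \<omega> $ i * W \<omega> $ j) * (?E \<omega> $ i * ?E \<omega> $ j))" for i j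
    by (intro intg) (measurable, intro bdd_rules bV bW vbdd_e)
  have int_ij2: "integrable M (\<lambda>\<omega>. V \<omega> $ i * W \<omega> $ j)" for i j
    by (intro intg) (measurable, intro bdd_rules bV bW)
  have trm: "(\<integral>\<omega>. (V \<omega> $ i * W \<omega> $ j) * (?E \<omega> $ i * ?E \<omega> $ j) \<partial>M)
      = (if i = j then (\<integral>\<omega>. V \<omega> $ i * W \<omega> $ j \<partial>M) / real CARD('n) else 0)" for i j
  proof -
    have "(\<integral>\<omega>. (V \<omega> $ i * W \<omega> $ j) * (?E \<omega> $ i * ?E \<omega> $ j) \<partial>M)
        = (\<integral>\<omega>. (V \<omega> $ i * W \<omega> $ j) * real_cond_exp M (F k) (\<lambda>\<omega>. ?E \<omega> $ i * ?E \<omega> $ j) \<omega> \<partial>M)"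
      by (rule sf.real_cond_exp_intg(2)[symmetric]) (use int_ij in auto)
    also have "\<dots> = (\<integral>\<omega>. (V \<omega> $ i * W \<omega> $ j) * (if i = j then 1 / real CARD('n) else 0) \<partial>M)"
      by (rule integral_cong_AE) (use e_cond[of k i j] in auto)
    also have "\<dots> = (if i = j then (\<integral>\<omega>. V \<omega> $ i * W \<omega> $ j \<partial>M) / real CARD('n) else 0)"
      by simp
    finally show ?thesis .
  qed
  have "(\<integral>\<omega>. (V \<omega> \<bullet> ?E \<omega>) * (?E \<omega> \<bullet> W \<omega>) \<partial>M)
      = (\<integral>\<omega>. (\<Sum>i\<in>UNIV. \<Sum>j\<in>UNIV. (V \<omega> $ i * W \<omega> $ j) * (?E \<omega> $ i * ?E \<omega> $ j)) \<partial>M)"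
    unfolding inner_expand ..
  also have "\<dots> = (\<Sum>i\<in>UNIV. \<Sum>j\<in>UNIV. (\<integral>\<omega>. (V \<omega> $ i * W \<omega> $ j) * (?E \<omega> $ i * ?E \<omega> $ j) \<partial>M))"
    using int_ij by (simp add: integral_sum)
  also have "\<dots> = (\<Sum>i\<in>UNIV. (\<integral>\<omega>. V \<omega> $ i * W \<omega> $ i \<partial>M) / real CARD('n))"
    unfolding trm by (simp add: sum.delta)
  also have "\<dots> = (\<integral>\<omega>. (\<Sum>i\<in>UNIV. V \<omega> $ i * W \<omega> $ i) \<partial>M) / real CARD('n)"
    using int_ij2 by (simp add: integral_sum sum_divide_distrib)
  also have "\<dots> = (\<integral>\<omega>. V \<omega> \<bullet> W \<omega> \<partial>M) / real CARD('n)"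
    unfolding inner_vec_def by simp
  finally show ?thesis .
qed

end

context mtm_setup begin

definition "a k = (\<integral>\<omega>. Phi k \<omega> \<partial>M)"

lemma grad_Y_bound:
  fixes x u :: "real^'n" and k :: nat
  defines "\<alpha> \<equiv> mtm_alpha CARD('n) (Suc k)" and "A \<equiv> mtm_A CARD('n) k" and "A' \<equiv> mtm_A CARD('n) (Suc k)"
  shows "(norm (gradf (yk CARD('n) k x u)))^2
     \<le> 2 * L * (1 + \<alpha>) / A' * (A * (f x - f xstar) + L/2 * (norm (u - xstar))^2)"
proof -
  let ?y = "yk CARD('n) k x u"
  have Apos: "A' > 0" unfolding A'_def using mtm_A_Suc_pos[OF n1] .
  have A0: "A \<ge> 0" unfolding A_def using mtm_A_nonneg[OF n1] .
  have a0: "\<alpha> > 0" unfolding \<alpha>_def using mtm_alpha_pos[OF n1] .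
  have AA: "A' = A + \<alpha>" unfolding A'_def A_def \<alpha>_def by (rule mtm_A_Suc)
  have g1: "(norm (gradf ?y))^2 \<le> 2 * L * (f ?y - f xstar)"
  proof -
    have "(norm (gradf ?y))^2 \<le> 2 * L * (f ?y - f (?y - (1/L) *\<^sub>R gradf ?y))"
      by (rule grad_min_zero[OF grad lip L_pos])
    also have "\<dots> \<le> 2 * L * (f ?y - f xstar)"
      using min[of "?y - (1/L) *\<^sub>R gradf ?y"] L_pos by (intro mult_left_mono) auto
    finally show ?thesis .
  qed
  have yeq: "?y = (1 - \<alpha>/A') *\<^sub>R x + (\<alpha>/A') *\<^sub>R u"
  proof -
    have h: "1 - \<alpha>/A' = A / A'" using Apos AA by (simp add: field_simps)
    have "?y = (A / A') *\<^sub>R x + (\<alpha>/A') *\<^sub>R u" unfolding yk_def \<alpha>_def[symmetric] A_def[symmetric] A'_def[symmetric]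
      by (simp add: scaleR_add_right add.commute)
    then show ?thesis unfolding h .
  qed
  have fy: "f ?y \<le> (1 - \<alpha>/A') * f x + (\<alpha>/A') * f u"
    unfolding yeq using Apos a0 AA A0 by (intro convex_onD[OF convex]) (auto simp: field_simps)
  have fu: "f u - f xstar \<le> L/2 * (norm (u - xstar))^2" by (rule f_upper[OF grad lip gz])
  have "f ?y - f xstar \<le> (1 - \<alpha>/A') * (f x - f xstar) + (\<alpha>/A') * (f u - f xstar)"
    using fy by (simp add: algebra_simps)
  also have "(1 - \<alpha>/A') = A / A'" using Apos AA by (simp add: field_simps)
  also have "(A / A') * (f x - f xstar) + (\<alpha>/A') * (f u - f xstar) = (A * (f x - f xstar) + \<alpha> * (f u - f xstar)) / A'"
    by (simp add: add_divide_distrib)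
  finally have "f ?y - f xstar \<le> (A * (f x - f xstar) + \<alpha> * (f u - f xstar)) / A'" .
  also have "\<dots> \<le> (A * (f x - f xstar) + \<alpha> * (L/2 * (norm (u - xstar))^2)) / A'"
    using fu a0 Apos by (intro divide_right_mono add_left_mono mult_left_mono) auto
  also have "\<dots> \<le> ((1 + \<alpha>) * (A * (f x - f xstar) + L/2 * (norm (u - xstar))^2)) / A'"
  proof -
    have "0 \<le> A * (f x - f xstar)" using A0 min[of x] by simp
    moreover have "0 \<le> L/2 * (norm (u - xstar))^2" using L_pos by simp
    moreover have gen: "\<And>P Q. 0 \<le> P \<Longrightarrow> 0 \<le> Q \<Longrightarrow> P + \<alpha> * Q \<le> (1 + \<alpha>) * (P + Q)"
    proof -
      fix P Q :: real assume "0 \<le> P" "0 \<le> Q"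
      then have "0 \<le> \<alpha> * P" using a0 by simp
      moreover have "(1 + \<alpha>) * (P + Q) = P + \<alpha> * Q + (Q + \<alpha> * P)" by (simp add: algebra_simps)
      ultimately show "P + \<alpha> * Q \<le> (1 + \<alpha>) * (P + Q)" using \<open>0 \<le> Q\<close> by linarith
    qed
    ultimately have "A * (f x - f xstar) + \<alpha> * (L/2 * (norm (u - xstar))^2)
        \<le> (1 + \<alpha>) * (A * (f x - f xstar) + L/2 * (norm (u - xstar))^2)"
      by blast
    then show ?thesis using Apos by (intro divide_right_mono) auto
  qed
  finally have "f ?y - f xstar \<le> ((1 + \<alpha>) * (A * (f x - f xstar) + L/2 * (norm (u - xstar))^2)) / A'" .
  then have "2 * L * (f ?y - f xstar) \<le> 2 * L * (((1 + \<alpha>) * (A * (f x - f xstar) + L/2 * (norm (u - xstar))^2)) / A')"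
    using L_pos by (intro mult_left_mono) auto
  with g1 show ?thesis by (simp add: field_simps)
qed

lemma Phi_nonneg: "Phi k \<omega> \<ge> 0"
  unfolding Phi_def using mtm_A_nonneg[OF n1, of k] min[of "X k \<omega>"] L_pos by simp

lemma Phi_ge_w: "L/2 * (norm (U k \<omega> - xstar))^2 \<le> Phi k \<omega>"
  unfolding Phi_def using mtm_A_nonneg[OF n1, of k] min[of "X k \<omega>"] by simp

end

lemma noise1: "0 \<le> (c::real) \<Longrightarrow> \<bar>d\<bar> \<le> \<delta> \<Longrightarrow> - c * d * v \<le> c * \<delta> * \<bar>v\<bar>"
proof -
  assume c: "0 \<le> c" and d: "\<bar>d\<bar> \<le> \<delta>"
  have "- d * v \<le> \<bar>d\<bar> * \<bar>v\<bar>" by (metis abs_ge_minus_self abs_minus_cancel abs_mult mult_minus_left)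
  also have "\<dots> \<le> \<delta> * \<bar>v\<bar>" using d by (intro mult_right_mono) auto
  finally have "- d * v \<le> \<delta> * \<bar>v\<bar>" .
  then have "c * (- d * v) \<le> c * (\<delta> * \<bar>v\<bar>)" using c by (rule mult_left_mono)
  then show ?thesis by (simp add: algebra_simps)
qed

lemma noise2: "0 \<le> (B::real) \<Longrightarrow> \<bar>d\<bar> \<le> \<delta> \<Longrightarrow> B * (s + d) * d \<le> B * \<delta> * \<bar>s\<bar> + B * \<delta>^2"
proof -
  assume B: "0 \<le> B" and d: "\<bar>d\<bar> \<le> \<delta>"
  have "s * d \<le> \<bar>s\<bar> * \<bar>d\<bar>" by (metis abs_ge_self abs_mult)
  also have "\<dots> \<le> \<bar>s\<bar> * \<delta>" using d by (intro mult_left_mono) auto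
  finally have 1: "s * d \<le> \<bar>s\<bar> * \<delta>" .
  have "d^2 = \<bar>d\<bar>^2" by simp
  also have "\<dots> \<le> \<delta>^2" using d by (intro power_mono) auto
  finally have 2: "d^2 \<le> \<delta>^2" .
  have "(s + d) * d \<le> \<delta> * \<bar>s\<bar> + \<delta>^2" using 1 2 by (simp add: algebra_simps power2_eq_square)
  then have "B * ((s + d) * d) \<le> B * (\<delta> * \<bar>s\<bar> + \<delta>^2)" using B by (rule mult_left_mono)
  then show ?thesis by (simp add: algebra_simps)
qed

context mtm_setup begin

lemma delta_nonneg: "\<delta> \<ge> 0"
proof -
  obtain \<omega> where "\<omega> \<in> space M" using prob_space.not_empty[OF prob] by blast
  then show ?thesis using dl_bound[of \<omega> 0] by linarith
qed

lemma step_exp: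
  fixes k :: nat
  defines "\<alpha> \<equiv> mtm_alpha CARD('n) (Suc k)" and "n \<equiv> real CARD('n)" and "A' \<equiv> mtm_A CARD('n) (Suc k)"
    and "B \<equiv> (real CARD('n))^2 * (mtm_alpha CARD('n) (Suc k))^2 / L"
  shows "a (Suc k) \<le> a k + \<delta> * (\<alpha> * n * sqrt (2 * a k / (L * n)) + B * sqrt (2 * L * (1 + \<alpha>) * a k / (A' * n))) + B * \<delta>^2"
proof -
  define E where "E = e (Suc k)"
  define D where "D = dl (Suc k)"
  define w where "w \<omega> = U k \<omega> - xstar" for \<omega>
  define G where "G \<omega> = gradf (Y k \<omega>)" for \<omega>
  define s where "s \<omega> = G \<omega> \<bullet> E \<omega>" for \<omega>
  have npos: "n > 0" unfolding n_def using n1 by simp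
  have Apos: "A' > 0" unfolding A'_def using mtm_A_Suc_pos[OF n1] .
  have a0: "\<alpha> > 0" unfolding \<alpha>_def using mtm_alpha_pos[OF n1] .
  have B0: "B \<ge> 0" unfolding B_def using L_pos by simp
  have Bn: "B = n^2 * \<alpha>^2 / L" unfolding B_def n_def \<alpha>_def ..
  have d0: "\<delta> \<ge> 0" by (rule delta_nonneg)
  have [measurable]: "E \<in> borel_measurable M" "D \<in> borel_measurable M" unfolding E_def D_def by measurable
  have [measurable]: "U k \<in> borel_measurable (F k)" using meas_XU by blast
  have mwF[measurable]: "w \<in> borel_measurable (F k)" unfolding w_def[abs_def] by measurable
  have mGF[measurable]: "G \<in> borel_measurable (F k)" unfolding G_def[abs_def] by measurable
  have [measurable]: "w \<in> borel_measurable M" "G \<in> borel_measurable M"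
    using measurable_from_subalg[OF subalg] mwF mGF by blast+
  have [measurable]: "s \<in> borel_measurable M" unfolding s_def[abs_def] by measurable
  have [measurable]: "Phi j \<in> borel_measurable M" for j unfolding Phi_def[abs_def] by measurable
  have vw: "vbdd w" unfolding w_def[abs_def] by (intro bdd_rules vbdd_U)
  have vG: "vbdd G" unfolding G_def[abs_def] by (intro bdd_rules vbdd_Y)
  have vE: "vbdd E" unfolding E_def by (rule vbdd_e)
  have bs: "bdd s" unfolding s_def[abs_def] using vG vE by (intro bdd_rules)
  have bPhi: "bdd (Phi j)" for j unfolding Phi_def[abs_def] by (intro bdd_rules bdd_f vbdd_X vbdd_U)
  have iPhi: "integrable M (Phi j)" for j by (intro intg bPhi) measurable
  have i1: "integrable M (\<lambda>\<omega>. G \<omega> \<bullet> w \<omega>)" by (intro intg bdd_rules vG vw) measurable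
  have i2: "integrable M (\<lambda>\<omega>. s \<omega> * (E \<omega> \<bullet> w \<omega>))" by (intro intg bdd_rules vw vE bs) measurable
  have i3: "integrable M (\<lambda>\<omega>. \<bar>E \<omega> \<bullet> w \<omega>\<bar>)" by (intro intg bdd_rules vw vE) measurable
  have i4: "integrable M (\<lambda>\<omega>. \<bar>s \<omega>\<bar>)" by (intro intg bdd_rules bs) measurable
  have i5: "integrable M (\<lambda>\<omega>. E \<omega> \<bullet> w \<omega>)" by (intro intg bdd_rules vw vE) measurable
  have i6: "integrable M (\<lambda>\<omega>. (E \<omega> \<bullet> w \<omega>)^2)" by (intro intg bdd_rules vw vE) measurable
  have i7: "integrable M s" by (intro intg bs) measurable
  have i8: "integrable M (\<lambda>\<omega>. (s \<omega>)^2)" by (intro intg bdd_rules bs) measurable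
  have i9: "integrable M (\<lambda>\<omega>. w \<omega> \<bullet> w \<omega>)" by (intro intg bdd_rules vw) measurable
  have i10: "integrable M (\<lambda>\<omega>. G \<omega> \<bullet> G \<omega>)" by (intro intg bdd_rules vG) measurable
  define R where "R \<omega> = Phi k \<omega> + (\<alpha> * (G \<omega> \<bullet> w \<omega>) - \<alpha> * n * s \<omega> * (E \<omega> \<bullet> w \<omega>))
     + \<alpha> * n * \<delta> * \<bar>E \<omega> \<bullet> w \<omega>\<bar> + B * \<delta> * \<bar>s \<omega>\<bar> + B * \<delta>^2" for \<omega>
  have pw: "Phi (Suc k) \<omega> \<le> R \<omega>" if \<omega>: "\<omega> \<in> space M" for \<omega>
  proof -
    have e1: "norm (E \<omega>) = 1" unfolding E_def using e_unit[OF \<omega>] .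
    have si: "A' * (f (fst (mtm_step L gradf k (X k \<omega>, U k \<omega>) (E \<omega>) (D \<omega>))) - f xstar)
        + L/2 * (norm (snd (mtm_step L gradf k (X k \<omega>, U k \<omega>) (E \<omega>) (D \<omega>)) - xstar))^2
     \<le> mtm_A CARD('n) k * (f (X k \<omega>) - f xstar) + L/2 * (norm (U k \<omega> - xstar))^2
        + (\<alpha> * (G \<omega> \<bullet> w \<omega>) - \<alpha> * n * s \<omega> * (E \<omega> \<bullet> w \<omega>))
        - \<alpha> * n * D \<omega> * (E \<omega> \<bullet> w \<omega>) + B * (s \<omega> + D \<omega>) * D \<omega>"
      using step_ineq[OF L_pos convex grad lip e1, where x="X k \<omega>" and u="U k \<omega>" and z=xstar and k=k and d="D \<omega>"]
      unfolding \<alpha>_def n_def A'_def B_def G_def s_def w_def Y_def by simp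
    have lhs: "Phi (Suc k) \<omega> = A' * (f (fst (mtm_step L gradf k (X k \<omega>, U k \<omega>) (E \<omega>) (D \<omega>))) - f xstar)
        + L/2 * (norm (snd (mtm_step L gradf k (X k \<omega>, U k \<omega>) (E \<omega>) (D \<omega>)) - xstar))^2"
      unfolding Phi_def X_def[of "Suc k"] U_def[of "Suc k"] st_Suc A'_def E_def D_def ..
    have dd: "\<bar>D \<omega>\<bar> \<le> \<delta>" unfolding D_def using dl_bound[OF \<omega>] .
    have "- (\<alpha> * n) * D \<omega> * (E \<omega> \<bullet> w \<omega>) \<le> (\<alpha> * n) * \<delta> * \<bar>E \<omega> \<bullet> w \<omega>\<bar>"
      by (rule noise1) (use a0 npos dd in auto)
    then have nz1: "- (\<alpha> * n * D \<omega> * (E \<omega> \<bullet> w \<omega>)) \<le> \<alpha> * n * \<delta> * \<bar>E \<omega> \<bullet> w \<omega>\<bar>" by simp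
    have pk: "Phi k \<omega> = mtm_A CARD('n) k * (f (X k \<omega>) - f xstar) + L/2 * (norm (U k \<omega> - xstar))^2"
      unfolding Phi_def ..
    have nz2: "B * (s \<omega> + D \<omega>) * D \<omega> \<le> B * \<delta> * \<bar>s \<omega>\<bar> + B * \<delta>^2"
      by (rule noise2[OF B0 dd])
    have "Phi (Suc k) \<omega> \<le> Phi k \<omega> + (\<alpha> * (G \<omega> \<bullet> w \<omega>) - \<alpha> * n * s \<omega> * (E \<omega> \<bullet> w \<omega>))
        - \<alpha> * n * D \<omega> * (E \<omega> \<bullet> w \<omega>) + B * (s \<omega> + D \<omega>) * D \<omega>"
      using si lhs pk by linarith
    then show ?thesis using nz1 nz2 unfolding R_def by linarith
  qed
  have iR: "integrable M R" unfolding R_def[abs_def]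
    by (intro intg bdd_rules bPhi vG vw vE bs) measurable
  have aR: "a (Suc k) \<le> (\<integral>\<omega>. R \<omega> \<partial>M)"
    unfolding a_def by (rule integral_mono[OF iPhi iR]) (use pw in auto)
  define Z where "Z \<omega> = \<alpha> * (G \<omega> \<bullet> w \<omega>) - \<alpha> * n * s \<omega> * (E \<omega> \<bullet> w \<omega>)" for \<omega>
  define N1 where "N1 \<omega> = \<alpha> * n * \<delta> * \<bar>E \<omega> \<bullet> w \<omega>\<bar>" for \<omega>
  define N2 where "N2 \<omega> = B * \<delta> * \<bar>s \<omega>\<bar>" for \<omega>
  have iZ: "integrable M Z" unfolding Z_def[abs_def] by (intro intg bdd_rules vG vw vE bs) measurable
  have iN1: "integrable M N1" unfolding N1_def[abs_def] by (intro intg bdd_rules vG vw vE bs) measurable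
  have iN2: "integrable M N2" unfolding N2_def[abs_def] by (intro intg bdd_rules vG vw vE bs) measurable
  have Req: "R = (\<lambda>\<omega>. Phi k \<omega> + Z \<omega> + N1 \<omega> + N2 \<omega> + B * \<delta>^2)"
    unfolding R_def[abs_def] Z_def N1_def N2_def ..
  have eqR: "(\<integral>\<omega>. R \<omega> \<partial>M) = a k + (\<integral>\<omega>. Z \<omega> \<partial>M) + (\<integral>\<omega>. N1 \<omega> \<partial>M) + (\<integral>\<omega>. N2 \<omega> \<partial>M) + B * \<delta>^2"
  proof -
    have ic: "integrable M (\<lambda>\<omega>. B * \<delta>^2)" by (intro intg bdd_const) measurable
    have i12: "integrable M (\<lambda>\<omega>. Phi k \<omega> + Z \<omega>)" using iPhi[of k] iZ by auto
    have i123: "integrable M (\<lambda>\<omega>. Phi k \<omega> + Z \<omega> + N1 \<omega>)" using i12 iN1 by auto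
    have i1234: "integrable M (\<lambda>\<omega>. Phi k \<omega> + Z \<omega> + N1 \<omega> + N2 \<omega>)" using i123 iN2 by auto
    have cst: "(\<integral>\<omega>. B * \<delta>^2 \<partial>M) = B * \<delta>^2" using prob_space.prob_space[OF prob] by simp
    show ?thesis unfolding Req a_def
      by (simp only: Bochner_Integration.integral_add[OF i1234 ic] Bochner_Integration.integral_add[OF i123 iN2]
         Bochner_Integration.integral_add[OF i12 iN1] Bochner_Integration.integral_add[OF iPhi[of k] iZ] cst)
  qed
  have aS: "a (Suc k) \<le> a k + (\<integral>\<omega>. Z \<omega> \<partial>M) + (\<integral>\<omega>. N1 \<omega> \<partial>M) + (\<integral>\<omega>. N2 \<omega> \<partial>M) + B * \<delta>^2"
    using aR eqR by simp
  have mGE: "(\<integral>\<omega>. (G \<omega> \<bullet> E \<omega>) * (E \<omega> \<bullet> w \<omega>) \<partial>M) = (\<integral>\<omega>. G \<omega> \<bullet> w \<omega> \<partial>M) / n"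
    unfolding E_def n_def by (rule moment[OF mGF mwF vG vw])
  have intZ: "(\<integral>\<omega>. Z \<omega> \<partial>M) = 0"
  proof -
    have "(\<integral>\<omega>. Z \<omega> \<partial>M) = (\<integral>\<omega>. \<alpha> * (G \<omega> \<bullet> w \<omega>) - (\<alpha> * n) * (s \<omega> * (E \<omega> \<bullet> w \<omega>)) \<partial>M)"
      unfolding Z_def by (simp add: mult.assoc)
    also have "\<dots> = \<alpha> * (\<integral>\<omega>. G \<omega> \<bullet> w \<omega> \<partial>M) - (\<alpha> * n) * (\<integral>\<omega>. s \<omega> * (E \<omega> \<bullet> w \<omega>) \<partial>M)"
      using i1 i2 by simp
    also have "(\<integral>\<omega>. s \<omega> * (E \<omega> \<bullet> w \<omega>) \<partial>M) = (\<integral>\<omega>. G \<omega> \<bullet> w \<omega> \<partial>M) / n"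
      unfolding s_def using mGE .
    finally show ?thesis using npos by simp
  qed
  have sq1: "(\<integral>\<omega>. (E \<omega> \<bullet> w \<omega>)^2 \<partial>M) \<le> 2 * a k / (L * n)"
  proof -
    have "(\<integral>\<omega>. (E \<omega> \<bullet> w \<omega>)^2 \<partial>M) = (\<integral>\<omega>. (w \<omega> \<bullet> E \<omega>) * (E \<omega> \<bullet> w \<omega>) \<partial>M)"
      by (simp add: power2_eq_square inner_commute)
    also have "\<dots> = (\<integral>\<omega>. w \<omega> \<bullet> w \<omega> \<partial>M) / n"
      unfolding E_def n_def by (rule moment[OF mwF mwF vw vw])
    also have "(\<integral>\<omega>. w \<omega> \<bullet> w \<omega> \<partial>M) \<le> (\<integral>\<omega>. (2/L) * Phi k \<omega> \<partial>M)"
    proof (rule integral_mono[OF i9])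
      show "integrable M (\<lambda>\<omega>. (2/L) * Phi k \<omega>)" using iPhi by simp
      fix \<omega> show "w \<omega> \<bullet> w \<omega> \<le> (2/L) * Phi k \<omega>"
        using Phi_ge_w[of k \<omega>] L_pos unfolding w_def by (simp add: power2_norm_eq_inner field_simps)
    qed
    also have "(\<integral>\<omega>. (2/L) * Phi k \<omega> \<partial>M) = (2/L) * a k" unfolding a_def by simp
    finally show ?thesis using npos L_pos by (simp add: divide_right_mono field_simps)
  qed
  have sq2: "(\<integral>\<omega>. (s \<omega>)^2 \<partial>M) \<le> 2 * L * (1 + \<alpha>) * a k / (A' * n)"
  proof -
    have "(\<integral>\<omega>. (s \<omega>)^2 \<partial>M) = (\<integral>\<omega>. (G \<omega> \<bullet> E \<omega>) * (E \<omega> \<bullet> G \<omega>) \<partial>M)"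
      unfolding s_def by (simp add: power2_eq_square inner_commute)
    also have "\<dots> = (\<integral>\<omega>. G \<omega> \<bullet> G \<omega> \<partial>M) / n"
      unfolding E_def n_def by (rule moment[OF mGF mGF vG vG])
    also have "(\<integral>\<omega>. G \<omega> \<bullet> G \<omega> \<partial>M) \<le> (\<integral>\<omega>. (2 * L * (1 + \<alpha>) / A') * Phi k \<omega> \<partial>M)"
    proof (rule integral_mono[OF i10])
      show "integrable M (\<lambda>\<omega>. (2 * L * (1 + \<alpha>) / A') * Phi k \<omega>)" using iPhi by simp
      fix \<omega> show "G \<omega> \<bullet> G \<omega> \<le> (2 * L * (1 + \<alpha>) / A') * Phi k \<omega>"
        using grad_Y_bound[of k "X k \<omega>" "U k \<omega>"] unfolding G_def Y_def Phi_def \<alpha>_def A'_def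
        by (simp add: power2_norm_eq_inner)
    qed
    also have "(\<integral>\<omega>. (2 * L * (1 + \<alpha>) / A') * Phi k \<omega> \<partial>M) = (2 * L * (1 + \<alpha>) / A') * a k" unfolding a_def by simp
    finally show ?thesis using npos Apos by (simp add: divide_right_mono field_simps)
  qed
  have intN1: "(\<integral>\<omega>. N1 \<omega> \<partial>M) \<le> \<alpha> * n * \<delta> * sqrt (2 * a k / (L * n))"
  proof -
    have "(\<integral>\<omega>. N1 \<omega> \<partial>M) = \<alpha> * n * \<delta> * (\<integral>\<omega>. \<bar>E \<omega> \<bullet> w \<omega>\<bar> \<partial>M)"
      unfolding N1_def by simp
    also have "(\<integral>\<omega>. \<bar>E \<omega> \<bullet> w \<omega>\<bar> \<partial>M) \<le> sqrt (\<integral>\<omega>. (E \<omega> \<bullet> w \<omega>)^2 \<partial>M)"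
      by (rule prob_space.abs_integral_le_sqrt[OF prob i5 i6])
    also have "\<dots> \<le> sqrt (2 * a k / (L * n))" using sq1 by (rule real_sqrt_le_mono)
    finally show ?thesis using a0 npos d0 by (simp add: mult_left_mono)
  qed
  have intN2: "(\<integral>\<omega>. N2 \<omega> \<partial>M) \<le> B * \<delta> * sqrt (2 * L * (1 + \<alpha>) * a k / (A' * n))"
  proof -
    have "(\<integral>\<omega>. N2 \<omega> \<partial>M) = B * \<delta> * (\<integral>\<omega>. \<bar>s \<omega>\<bar> \<partial>M)"
      unfolding N2_def by simp
    also have "(\<integral>\<omega>. \<bar>s \<omega>\<bar> \<partial>M) \<le> sqrt (\<integral>\<omega>. (s \<omega>)^2 \<partial>M)"
      by (rule prob_space.abs_integral_le_sqrt[OF prob i7 i8])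
    also have "\<dots> \<le> sqrt (2 * L * (1 + \<alpha>) * a k / (A' * n))" using sq2 by (rule real_sqrt_le_mono)
    finally show ?thesis using B0 d0 by (simp add: mult_left_mono)
  qed
  show ?thesis using aS intZ intN1 intN2 by (simp add: algebra_simps)
qed

end

lemma rec_sqrt:
  fixes a c ee :: "nat \<Rightarrow> real"
  assumes a0: "\<And>k. a k \<ge> 0" and c0: "\<And>k. c k \<ge> 0" and e0: "\<And>k. ee k \<ge> 0" and d: "\<delta> \<ge> 0"
    and rec: "\<And>k. a (Suc k) \<le> a k + \<delta> * c k * sqrt (a k) + ee k"
  shows "sqrt (a N) \<le> sqrt (a 0 + (\<Sum>k<N. ee k)) + \<delta>/2 * (\<Sum>k<N. c k)"
proof (induction N)
  case 0
  then show ?case by simp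
next
  case (Suc N)
  define S where "S = a 0 + (\<Sum>k<N. ee k)"
  define D where "D = \<delta>/2 * (\<Sum>k<N. c k)"
  have S0: "S \<ge> 0" unfolding S_def using a0 e0 by (simp add: sum_nonneg)
  have D0: "D \<ge> 0" unfolding D_def using c0 d by (simp add: sum_nonneg)
  have dc: "\<delta> * c N \<ge> 0" using c0 d by simp
  have IH: "sqrt (a N) \<le> sqrt S + D" using Suc unfolding S_def D_def .
  have sq: "a N \<le> (sqrt S + D)^2"
  proof -
    have "a N = (sqrt (a N))^2" using a0[of N] by simp
    also have "\<dots> \<le> (sqrt S + D)^2" using IH a0[of N] by (intro power_mono) auto
    finally show ?thesis .
  qed
  have ss: "sqrt S \<le> sqrt (S + ee N)" using e0 by simp
  have "a (Suc N) \<le> a N + \<delta> * c N * sqrt (a N) + ee N" by (rule rec)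
  also have "\<dots> \<le> (sqrt S + D)^2 + \<delta> * c N * (sqrt S + D) + ee N"
    using sq IH dc by (intro add_mono mult_left_mono) auto
  also have "\<dots> \<le> (sqrt (S + ee N) + D + \<delta> * c N / 2)^2"
  proof -
    have e1: "(sqrt (S + ee N))^2 = S + ee N" using S0 e0 by simp
    have e2: "(sqrt S)^2 = S" using S0 by simp
    have m1: "sqrt S * D \<le> sqrt (S + ee N) * D" using ss D0 by (rule mult_right_mono)
    have m2: "sqrt S * (\<delta> * c N) \<le> sqrt (S + ee N) * (\<delta> * c N)" using ss dc by (rule mult_right_mono)
    have m3: "0 \<le> (\<delta> * c N)^2" by simp
    show ?thesis using e1 e2 m1 m2 m3 by (simp add: power2_eq_square algebra_simps)
  qed
  finally have "a (Suc N) \<le> (sqrt (S + ee N) + D + \<delta> * c N / 2)^2" .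
  then have "sqrt (a (Suc N)) \<le> sqrt (S + ee N) + D + \<delta> * c N / 2"
    using S0 e0 D0 dc by (intro real_le_lsqrt) auto
  then show ?case unfolding S_def D_def by (simp add: algebra_simps)
qed

lemma sum_sq_bound:
  fixes c :: real assumes "c \<ge> 0"
  shows "(\<Sum>k<N. (real k + c)^2) \<le> ((real N + c)^3 - c^3) / 3"
proof (induction N)
  case 0 then show ?case by simp
next
  case (Suc N)
  have "(\<Sum>k<Suc N. (real k + c)^2) = (\<Sum>k<N. (real k + c)^2) + (real N + c)^2" by simp
  also have "\<dots> \<le> ((real N + c)^3 - c^3) / 3 + (real N + c)^2" using Suc by simp
  also have "\<dots> \<le> ((real (Suc N) + c)^3 - c^3) / 3"
    using assms by (simp add: power3_eq_cube power2_eq_square algebra_simps)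
  finally show ?case .
qed

lemma c_bound:
  fixes n k :: nat and L :: real
  assumes n1: "n \<ge> 1" and L: "L > 0"
  defines "\<alpha> \<equiv> mtm_alpha n (Suc k)" and "A' \<equiv> mtm_A n (Suc k)"
  shows "\<alpha> * real n * sqrt (2 / (L * real n)) + ((real n)^2 * \<alpha>^2 / L) * sqrt (2 * L * (1 + \<alpha>) / (A' * real n))
     \<le> 2 * \<alpha> * sqrt (2 * real n * (1 + \<alpha>) / L)"
proof -
  have a0: "\<alpha> > 0" unfolding \<alpha>_def using mtm_alpha_pos[OF n1] .
  have Apos: "A' > 0" unfolding A'_def using mtm_A_Suc_pos[OF n1] .
  have na: "(real n)^2 * \<alpha>^2 \<le> A'" unfolding \<alpha>_def A'_def by (rule mtm_alpha_sq_le[OF n1])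
  have np: "real n > 0" using n1 by simp
  have t1: "\<alpha> * real n * sqrt (2 / (L * real n)) \<le> \<alpha> * sqrt (2 * real n * (1 + \<alpha>) / L)"
  proof -
    have "real n * sqrt (2 / (L * real n)) = sqrt ((real n)^2 * (2 / (L * real n)))"
      using np by (subst real_sqrt_mult) simp
    also have "\<dots> \<le> sqrt (2 * real n * (1 + \<alpha>) / L)"
      using np L a0 by (intro real_sqrt_le_mono) (simp add: field_simps power2_eq_square)
    finally show ?thesis using a0 by (simp add: mult.assoc)
  qed
  have t2: "((real n)^2 * \<alpha>^2 / L) * sqrt (2 * L * (1 + \<alpha>) / (A' * real n)) \<le> \<alpha> * sqrt (2 * real n * (1 + \<alpha>) / L)"
  proof -
    define B where "B = (real n)^2 * \<alpha>^2 / L"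
    have B0: "B \<ge> 0" unfolding B_def using L by simp
    have "B * sqrt (2 * L * (1 + \<alpha>) / (A' * real n)) = sqrt (B^2 * (2 * L * (1 + \<alpha>) / (A' * real n)))"
      using B0 by (subst real_sqrt_mult) simp
    also have "\<dots> \<le> sqrt (\<alpha>^2 * (2 * real n * (1 + \<alpha>) / L))"
    proof (intro real_sqrt_le_mono)
      have "B^2 * (2 * L * (1 + \<alpha>) / (A' * real n)) = ((real n)^2 * \<alpha>^2) * (\<alpha>^2 * (2 * real n * (1 + \<alpha>) / L)) / A'"
        unfolding B_def using L np Apos by (simp add: field_simps power2_eq_square)
      also have "\<dots> \<le> A' * (\<alpha>^2 * (2 * real n * (1 + \<alpha>) / L)) / A'"
        using na a0 L np Apos by (intro divide_right_mono mult_right_mono) auto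
      also have "\<dots> = \<alpha>^2 * (2 * real n * (1 + \<alpha>) / L)" using Apos by simp
      finally show "B^2 * (2 * L * (1 + \<alpha>) / (A' * real n)) \<le> \<alpha>^2 * (2 * real n * (1 + \<alpha>) / L)" .
    qed
    also have "\<dots> = \<alpha> * sqrt (2 * real n * (1 + \<alpha>) / L)" using a0 by (subst real_sqrt_mult) simp
    finally show ?thesis unfolding B_def .
  qed
  show ?thesis using t1 t2 by simp
qed

lemma final_arith:
  fixes n N :: nat and L \<epsilon> P \<delta> :: real
  assumes n1: "n \<ge> 1" and L: "L > 0" and eps: "\<epsilon> > 0" and P: "P > 0" and d0: "\<delta> \<ge> 0" and N1: "N \<ge> 1"
    and Nlo: "sqrt 2 * real n * P / sqrt \<epsilon> + 1 - 2 * real n \<le> real N"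
    and Nhi: "real N < sqrt 2 * real n * P / sqrt \<epsilon> + 2 - 2 * real n"
    and d1: "\<delta>^2 \<le> \<epsilon> * sqrt \<epsilon> * L / (16 * sqrt 2 * real n * P)"
    and d2: "\<delta> \<le> \<epsilon> * sqrt \<epsilon> * sqrt L / (96 * sqrt (real n) * P^2)"
  shows "sqrt (P^2/2 + (\<Sum>k<N. (real n)^2 * (mtm_alpha n (Suc k))^2 / L * \<delta>^2))
          + \<delta>/2 * (\<Sum>k<N. 2 * mtm_alpha n (Suc k) * sqrt (2 * real n * (1 + mtm_alpha n (Suc k)) / L))
         \<le> sqrt (3/2) * P"
    and "mtm_A n N \<ge> P^2 / (2 * \<epsilon>)"
proof -
  define nn where "nn = real n"
  define r where "r = sqrt \<epsilon>"
  define T where "T = sqrt 2 * nn * P / r"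
  define M where "M = real N + 2 * nn"
  have nn1: "nn \<ge> 1" unfolding nn_def using n1 by simp
  have r0: "r > 0" unfolding r_def using eps by simp
  have rr: "r^2 = \<epsilon>" unfolding r_def using eps by simp
  have s2: "sqrt 2 * sqrt 2 = (2::real)" by simp
  have Tr: "T * r = sqrt 2 * nn * P" unfolding T_def using r0 by simp
  have T0: "T > 0" unfolding T_def using r0 nn1 P by simp
  have Mlo: "M \<ge> T + 1" using Nlo unfolding M_def T_def nn_def r_def by simp
  have Mhi: "M < T + 2" using Nhi unfolding M_def T_def nn_def r_def by simp
  have Tn: "T > 2 * nn - 1" using Mhi N1 unfolding M_def by simp
  have T1: "T > 1" using Tn nn1 by simp
  have M3: "M < 3 * T" using Mhi T1 by simp
  have rM: "r * M \<le> 3 * sqrt 2 * nn * P"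
  proof -
    have "r * M \<le> r * (3 * T)" using M3 r0 by simp
    also have "\<dots> = 3 * sqrt 2 * nn * P" using Tr by (simp add: algebra_simps)
    finally show ?thesis .
  qed
  have rM0: "r * M \<ge> 0" using r0 Mlo T0 by simp
  have rP: "r < sqrt 2 * P"
  proof -
    have "T > nn" using Tn nn1 by simp
    then have "T * r > nn * r" using r0 by simp
    then have "sqrt 2 * nn * P > nn * r" using Tr by simp
    then show ?thesis using nn1 by (simp add: mult.assoc)
  qed
  have AN: "mtm_A n N = (M^2 - M - 2 * nn) / (4 * nn^2)"
    unfolding mtm_A_closed[OF n1] M_def nn_def by (simp add: power2_eq_square algebra_simps)
  show "mtm_A n N \<ge> P^2 / (2 * \<epsilon>)"
  proof -
    have "M - 1 \<ge> 2 * nn" using N1 unfolding M_def by simp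
    then have "M^2 - M - 2 * nn \<ge> (M - 1)^2" by (simp add: power2_eq_square algebra_simps)
    moreover have "(M - 1)^2 \<ge> T^2" using Mlo T0 by (intro power_mono) auto
    moreover have "T^2 = 2 * nn^2 * P^2 / \<epsilon>"
      unfolding T_def rr[symmetric] using r0 by (simp add: power2_eq_square field_simps)
    ultimately have "M^2 - M - 2 * nn \<ge> 2 * nn^2 * P^2 / \<epsilon>" by linarith
    then have "(M^2 - M - 2 * nn) / (4 * nn^2) \<ge> (2 * nn^2 * P^2 / \<epsilon>) / (4 * nn^2)"
      using nn1 by (intro divide_right_mono) auto
    also have "(2 * nn^2 * P^2 / \<epsilon>) / (4 * nn^2) = P^2 / (2 * \<epsilon>)" using nn1 by (simp add: field_simps)
    finally show ?thesis using AN by simp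
  qed
  have SB: "(\<Sum>k<N. (real n)^2 * (mtm_alpha n (Suc k))^2 / L * \<delta>^2) \<le> 9/32 * P^2"
  proof -
    have "(\<Sum>k<N. (real n)^2 * (mtm_alpha n (Suc k))^2 / L * \<delta>^2) = \<delta>^2 / (4 * nn^2 * L) * (\<Sum>k<N. (real k + 2 * nn)^2)"
      unfolding sum_distrib_left using nn1 L by (intro sum.cong) (auto simp: nn_def field_simps power2_eq_square)
    also have "\<dots> \<le> \<delta>^2 / (4 * nn^2 * L) * (((real N + 2 * nn)^3 - (2 * nn)^3) / 3)"
      using nn1 L by (intro mult_left_mono sum_sq_bound) auto
    also have "\<dots> \<le> \<delta>^2 / (4 * nn^2 * L) * (M^3 / 3)"
      using nn1 L unfolding M_def by (intro mult_left_mono divide_right_mono) auto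
    also have "\<dots> \<le> (\<epsilon> * sqrt \<epsilon> * L / (16 * sqrt 2 * nn * P)) / (4 * nn^2 * L) * (M^3 / 3)"
      using d1 nn1 L Mlo T0 unfolding nn_def by (intro mult_right_mono divide_right_mono) auto
    also have "\<dots> = (r * M)^3 / (192 * sqrt 2 * nn^3 * P)"
      unfolding rr[symmetric] r_def[symmetric] using nn1 L P r0
      by (simp add: field_simps power2_eq_square power3_eq_cube)
    also have "\<dots> \<le> (3 * sqrt 2 * nn * P)^3 / (192 * sqrt 2 * nn^3 * P)"
      using rM rM0 nn1 P by (intro divide_right_mono power_mono) auto
    also have "\<dots> = 9/32 * P^2"
      using nn1 P s2 by (simp add: field_simps power2_eq_square power3_eq_cube)
    finally show ?thesis .
  qed
  have part1: "sqrt (P^2/2 + (\<Sum>k<N. (real n)^2 * (mtm_alpha n (Suc k))^2 / L * \<delta>^2)) \<le> 9/10 * P"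
  proof -
    define Sx where "Sx = (\<Sum>k<N. (real n)^2 * (mtm_alpha n (Suc k))^2 / L * \<delta>^2)"
    have "Sx \<le> 9/32 * P^2" using SB unfolding Sx_def .
    moreover have "(9/10 * P)^2 = 81/100 * P^2" by (simp add: power2_eq_square)
    moreover have "P^2 \<ge> 0" by simp
    ultimately have "P^2/2 + Sx \<le> (9/10 * P)^2" by linarith
    then show ?thesis unfolding Sx_def[symmetric] using P by (intro real_le_lsqrt) auto
  qed
  define X where "X = 1 + M / (2 * nn^2)"
  have X1: "X \<ge> 1" unfolding X_def using Mlo T0 nn1 by simp
  have al: "mtm_alpha n (Suc k) \<le> M / (2 * nn^2)" if "k < N" for k
    using that nn1 unfolding M_def nn_def by (simp add: divide_right_mono)
  have sum_al: "(\<Sum>k<N. mtm_alpha n (Suc k)) \<le> M^2 / (4 * nn^2)"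
  proof -
    have "mtm_A n N = mtm_alpha n 0 + (\<Sum>k<N. mtm_alpha n (Suc k))"
      unfolding mtm_A_def lessThan_Suc_atMost[symmetric] sum.lessThan_Suc_shift ..
    moreover have "mtm_alpha n 0 \<ge> 0" using n1 by simp
    moreover have "mtm_A n N \<le> M^2 / (4 * nn^2)"
      unfolding AN using nn1 Mlo T0 by (intro divide_right_mono) auto
    ultimately show ?thesis by linarith
  qed
  have SC: "(\<Sum>k<N. 2 * mtm_alpha n (Suc k) * sqrt (2 * real n * (1 + mtm_alpha n (Suc k)) / L))
      \<le> 2 * sqrt (2 * nn * X / L) * (M^2 / (4 * nn^2))"
  proof -
    have "(\<Sum>k<N. 2 * mtm_alpha n (Suc k) * sqrt (2 * real n * (1 + mtm_alpha n (Suc k)) / L))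
        \<le> (\<Sum>k<N. mtm_alpha n (Suc k) * (2 * sqrt (2 * nn * X / L)))"
    proof (intro sum_mono)
      fix k assume "k \<in> {..<N}"
      then have "mtm_alpha n (Suc k) \<le> M / (2 * nn^2)" using al by simp
      then have h: "sqrt (2 * real n * (1 + mtm_alpha n (Suc k)) / L) \<le> sqrt (2 * nn * X / L)"
        using nn1 L unfolding X_def nn_def by (intro real_sqrt_le_mono divide_right_mono mult_left_mono) auto
      have "mtm_alpha n (Suc k) * (2 * sqrt (2 * real n * (1 + mtm_alpha n (Suc k)) / L))
          \<le> mtm_alpha n (Suc k) * (2 * sqrt (2 * nn * X / L))"
        using h mtm_alpha_pos[OF n1, of k] by (intro mult_left_mono) auto
      then show "2 * mtm_alpha n (Suc k) * sqrt (2 * real n * (1 + mtm_alpha n (Suc k)) / L)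
          \<le> mtm_alpha n (Suc k) * (2 * sqrt (2 * nn * X / L))"
        by (simp only: ac_simps)
    qed
    also have "\<dots> = 2 * sqrt (2 * nn * X / L) * (\<Sum>k<N. mtm_alpha n (Suc k))"
      by (simp only: sum_distrib_right[symmetric] mult.commute)
    also have "\<dots> \<le> 2 * sqrt (2 * nn * X / L) * (M^2 / (4 * nn^2))"
      using sum_al nn1 X1 L by (intro mult_left_mono) auto
    finally show ?thesis .
  qed
  have part2: "\<delta>/2 * (\<Sum>k<N. 2 * mtm_alpha n (Suc k) * sqrt (2 * real n * (1 + mtm_alpha n (Suc k)) / L)) \<le> 3/20 * P"
  proof -
    have sq0: "sqrt (2 * nn * X / L) \<ge> 0" using nn1 X1 L by simp
    have "\<delta>/2 * (\<Sum>k<N. 2 * mtm_alpha n (Suc k) * sqrt (2 * real n * (1 + mtm_alpha n (Suc k)) / L))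
        \<le> \<delta>/2 * (2 * sqrt (2 * nn * X / L) * (M^2 / (4 * nn^2)))"
      using SC d0 by (intro mult_left_mono) auto
    also have "\<dots> = \<delta> * (sqrt (2 * nn * X / L) * (M^2 / (4 * nn^2)))" by simp
    also have "\<dots> \<le> (\<epsilon> * sqrt \<epsilon> * sqrt L / (96 * sqrt (real n) * P^2)) * (sqrt (2 * nn * X / L) * (M^2 / (4 * nn^2)))"
      using d2 sq0 nn1 by (intro mult_right_mono) auto
    also have "\<dots> = r * (r * M)^2 * sqrt (2 * X) / (384 * nn^2 * P^2)"
    proof -
      have "sqrt L * sqrt (2 * nn * X / L) = sqrt nn * sqrt (2 * X)"
        using L by (simp add: real_sqrt_mult[symmetric] field_simps)
      then show ?thesis unfolding rr[symmetric] r_def[symmetric] nn_def[symmetric] using nn1 P r0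
        by (simp add: field_simps power2_eq_square)
    qed
    also have "\<dots> \<le> r * (3 * sqrt 2 * nn * P)^2 * sqrt (2 * X) / (384 * nn^2 * P^2)"
      using rM rM0 r0 X1 nn1 P by (intro divide_right_mono mult_right_mono mult_left_mono power_mono) auto
    also have "\<dots> = 3/64 * (r * sqrt (2 * X))"
      using nn1 P s2 by (simp add: field_simps power2_eq_square)
    also have "r * sqrt (2 * X) \<le> 16/5 * P"
    proof -
      have "r^2 * X = r^2 + r * (r * M) / (2 * nn^2)" unfolding X_def using nn1 by (simp add: field_simps power2_eq_square)
      also have "\<dots> \<le> (sqrt 2 * P)^2 + (sqrt 2 * P) * (3 * sqrt 2 * nn * P) / (2 * nn^2)"
      proof -
        have a1: "r^2 \<le> (sqrt 2 * P)^2" using rP r0 by (intro power_mono) auto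
        have a2: "r * (r * M) \<le> (sqrt 2 * P) * (3 * sqrt 2 * nn * P)"
          using rP rM rM0 P by (rule_tac mult_mono) auto
        have "r * (r * M) / (2 * nn^2) \<le> (sqrt 2 * P) * (3 * sqrt 2 * nn * P) / (2 * nn^2)"
          using a2 nn1 by (intro divide_right_mono) auto
        then show ?thesis using a1 by linarith
      qed
      also have "\<dots> = 2 * P^2 + 3 * P^2 / nn" using s2 nn1 by (simp add: field_simps power2_eq_square)
      also have "\<dots> \<le> 2 * P^2 + 3 * P^2" using nn1 P by (simp add: field_simps)
      finally have "r^2 * X \<le> 5 * P^2" by simp
      have "r * sqrt (2 * X) = sqrt (2 * (r^2 * X))" using r0 X1 by (simp add: real_sqrt_mult)
      also have "\<dots> \<le> 16/5 * P"
      proof (rule real_le_lsqrt)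
        show "0 \<le> 16/5 * P" using P by simp
        have "(16/5 * P)^2 = 256/25 * P^2" by (simp add: power2_eq_square)
        moreover have "P^2 \<ge> 0" by simp
        ultimately show "2 * (r^2 * X) \<le> (16/5 * P)^2" using \<open>r^2 * X \<le> 5 * P^2\<close> by linarith
      qed
      finally show ?thesis .
    qed
    then have "3/64 * (r * sqrt (2 * X)) \<le> 3/64 * (16/5 * P)" by simp
    finally show ?thesis by simp
  qed
  have "9/10 * P + 3/20 * P \<le> sqrt (3/2) * P"
  proof -
    have "(21/20::real) \<le> sqrt (3/2)" by (intro real_le_rsqrt) (simp add: power2_eq_square)
    then show ?thesis using P by (simp add: mult_right_mono)
  qed
  then show "sqrt (P^2/2 + (\<Sum>k<N. (real n)^2 * (mtm_alpha n (Suc k))^2 / L * \<delta>^2))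
          + \<delta>/2 * (\<Sum>k<N. 2 * mtm_alpha n (Suc k) * sqrt (2 * real n * (1 + mtm_alpha n (Suc k)) / L))
         \<le> sqrt (3/2) * P" using part1 part2 by linarith
qed

lemma eps_powr: "\<epsilon> > 0 \<Longrightarrow> \<epsilon> powr (3/2) = \<epsilon> * sqrt (\<epsilon>::real)"
proof -
  assume e: "\<epsilon> > 0"
  have "\<epsilon> powr (3/2) = \<epsilon> powr (1 + 1/2)" by simp
  also have "\<dots> = \<epsilon> * \<epsilon> powr (1/2)" using e by (subst powr_add) simp
  also have "\<dots> = \<epsilon> * sqrt \<epsilon>" using e by (simp add: powr_half_sqrt)
  finally show ?thesis .
qed

lemma eps_powr2: "\<epsilon> > 0 \<Longrightarrow> (\<epsilon> powr (3/4))^2 = \<epsilon> * sqrt (\<epsilon>::real)"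
proof -
  assume e: "\<epsilon> > 0"
  have "(\<epsilon> powr (3/4))^2 = \<epsilon> powr (of_nat 2 * (3/4))" using e by (subst powr_power) auto
  also have "\<dots> = \<epsilon> powr (3/2)" by simp
  finally show ?thesis using eps_powr[OF e] by simp
qed

lemma root42: "(root 4 2)^2 = sqrt (2::real)"
proof -
  have "(root 4 2)^2 = (2 powr (1/4))^2" by (simp add: root_powr_inverse)
  also have "\<dots> = 2 powr (of_nat 2 * (1/4))" by (subst powr_power) auto
  also have "\<dots> = sqrt 2" by (simp add: powr_half_sqrt)
  finally show ?thesis .
qed

theorem theorem5:
  fixes f :: "real^'n \<Rightarrow> real" and gradf :: "real^'n \<Rightarrow> real^'n"
    and L :: real and xstar x0 :: "real^'n"
    and M :: "'a measure" and F :: "nat \<Rightarrow> 'a measure"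
    and e :: "nat \<Rightarrow> 'a \<Rightarrow> real^'n" and dl :: "nat \<Rightarrow> 'a \<Rightarrow> real"
    and \<delta> \<epsilon> P0 :: real and N :: int
  assumes L_pos: "L > 0"
    and convex: "convex_on UNIV f"
    and grad: "\<And>x. (f has_derivative (\<lambda>h. gradf x \<bullet> h)) (at x)"
    and lip: "\<And>x y. norm (gradf x - gradf y) \<le> L * norm (x - y)"
    and min: "\<And>x. f xstar \<le> f x"
    and prob: "prob_space M"
    and subalg: "\<And>k. subalgebra M (F k)"
    and filt: "\<And>k. sets (F k) \<subseteq> sets (F (Suc k))"
    and e_meas: "\<And>k. e (Suc k) \<in> borel_measurable (F (Suc k))"
    and dl_meas: "\<And>k. dl (Suc k) \<in> borel_measurable (F (Suc k))"
    and e_unit: "\<And>k \<omega>. \<omega> \<in> space M \<Longrightarrow> norm (e (Suc k) \<omega>) = 1"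
    and e_cond: "\<And>k i j. AE \<omega> in M.
        real_cond_exp M (F k) (\<lambda>\<omega>. e (Suc k) \<omega> $ i * e (Suc k) \<omega> $ j) \<omega>
          = (if i = j then 1 / real CARD('n) else 0)"
    and dl_bound: "\<And>k \<omega>. \<omega> \<in> space M \<Longrightarrow> \<bar>dl (Suc k) \<omega>\<bar> \<le> \<delta>"
    and P0_def: "P0 = sqrt (2 * (1/2 * (normL L (x0 - xstar))^2
                    + (1 - 1 / real CARD('n)) * (f x0 - f xstar)))"
    and eps_pos: "\<epsilon> > 0"
    and N_def: "N = \<lceil>sqrt 2 * real CARD('n) * P0 / sqrt \<epsilon> + 1 - 2 * real CARD('n)\<rceil>"
    and N_ge: "N \<ge> 1"
    and delta_le: "\<delta> \<le> min (\<epsilon> powr (3/4) * sqrt L / (4 * root 4 2 * sqrt (real CARD('n) * P0)))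
                          (\<epsilon> powr (3/2) * sqrt L / (96 * sqrt (real CARD('n)) * P0^2))"
  shows "(\<integral>\<omega>. f (fst (mtm L gradf x0 (\<lambda>k. e k \<omega>) (\<lambda>k. dl k \<omega>) (nat N))) \<partial>M) - f xstar
           \<le> 3 * \<epsilon>"
proof -
  interpret S: mtm_setup f gradf L xstar x0 M F e dl \<delta>
    by (rule mtm_setup.intro) (fact L_pos convex grad lip min prob subalg filt e_meas dl_meas e_unit e_cond dl_bound)+
  define n where "n = CARD('n)"
  have n1: "n \<ge> 1" unfolding n_def using S.n1 .
  define Nn where "Nn = nat N"
  have Nn1: "Nn \<ge> 1" unfolding Nn_def using N_ge by simp
  have rN: "real Nn = real_of_int N" unfolding Nn_def using N_ge by simp
  have d0: "\<delta> \<ge> 0" by (rule S.delta_nonneg)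
  define z where "z = sqrt 2 * real n * P0 / sqrt \<epsilon> + 1 - 2 * real n"
  have Nz: "real_of_int N = real_of_int \<lceil>z\<rceil>" unfolding N_def z_def n_def ..
  have Nlo: "z \<le> real Nn" unfolding rN Nz by simp
  have Nhi: "real Nn < z + 1" unfolding rN Nz using ceiling_correct[of z] by linarith
  have arg0: "0 \<le> 1/2 * (normL L (x0 - xstar))^2 + (1 - 1 / real CARD('n)) * (f x0 - f xstar)"
  proof -
    have "1 - 1 / real CARD('n) \<ge> 0" using n1 unfolding n_def by simp
    then show ?thesis using min[of x0] by (intro add_nonneg_nonneg mult_nonneg_nonneg) auto
  qed
  have P00: "P0 \<ge> 0" unfolding P0_def using arg0 by simp
  have P0pos: "P0 > 0"
  proof (rule ccontr)
    assume "\<not> P0 > 0"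
    then have "P0 = 0" using P00 by simp
    then have "z = 1 - 2 * real n" unfolding z_def by simp
    then have "real Nn < 2 - 2 * real n" using Nhi by simp
    then show False using Nn1 n1 by simp
  qed
  have P0sq: "P0^2 = 2 * (1/2 * (normL L (x0 - xstar))^2 + (1 - 1 / real CARD('n)) * (f x0 - f xstar))"
    unfolding P0_def using arg0 by simp
  have a0: "S.a 0 = P0^2 / 2"
  proof -
    have "S.Phi 0 = (\<lambda>\<omega>. (1 - 1 / real CARD('n)) * (f x0 - f xstar) + L/2 * (norm (x0 - xstar))^2)"
      unfolding S.Phi_def[abs_def] S.X0 S.U0 mtm_A_def by simp
    then have "S.a 0 = (1 - 1 / real CARD('n)) * (f x0 - f xstar) + L/2 * (norm (x0 - xstar))^2"
      unfolding S.a_def using prob_space.prob_space[OF prob] by simp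
    also have "\<dots> = P0^2 / 2" unfolding P0sq normL_sq[OF less_imp_le[OF L_pos]] by simp
    finally show ?thesis .
  qed
  define c where "c k = mtm_alpha n (Suc k) * real n * sqrt (2 / (L * real n))
     + ((real n)^2 * (mtm_alpha n (Suc k))^2 / L) * sqrt (2 * L * (1 + mtm_alpha n (Suc k)) / (mtm_A n (Suc k) * real n))" for k
  define ee where "ee k = (real n)^2 * (mtm_alpha n (Suc k))^2 / L * \<delta>^2" for k
  have a_nn: "S.a k \<ge> 0" for k unfolding S.a_def by (rule Bochner_Integration.integral_nonneg) (use S.Phi_nonneg in auto)
  have c0: "c k \<ge> 0" for k
    unfolding c_def using n1 L_pos mtm_alpha_pos[OF n1, of k] mtm_A_Suc_pos[OF n1, of k] by simp
  have ee0: "ee k \<ge> 0" for k unfolding ee_def using L_pos by simp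
  have rec: "S.a (Suc k) \<le> S.a k + \<delta> * c k * sqrt (S.a k) + ee k" for k
  proof -
    have s1: "sqrt (2 * S.a k / (L * real n)) = sqrt (2 / (L * real n)) * sqrt (S.a k)"
      by (subst real_sqrt_mult[symmetric]) simp
    have s2: "sqrt (2 * L * (1 + mtm_alpha n (Suc k)) * S.a k / (mtm_A n (Suc k) * real n))
        = sqrt (2 * L * (1 + mtm_alpha n (Suc k)) / (mtm_A n (Suc k) * real n)) * sqrt (S.a k)"
      by (subst real_sqrt_mult[symmetric]) simp
    have "S.a (Suc k) \<le> S.a k + \<delta> * (mtm_alpha n (Suc k) * real n * sqrt (2 * S.a k / (L * real n))
        + ((real n)^2 * (mtm_alpha n (Suc k))^2 / L) * sqrt (2 * L * (1 + mtm_alpha n (Suc k)) * S.a k / (mtm_A n (Suc k) * real n)))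
        + ((real n)^2 * (mtm_alpha n (Suc k))^2 / L) * \<delta>^2"
      using S.step_exp[of k] unfolding n_def by simp
    also have "\<dots> = S.a k + \<delta> * c k * sqrt (S.a k) + ee k"
      unfolding s1 s2 c_def ee_def by (simp add: algebra_simps)
    finally show ?thesis .
  qed
  have main1: "sqrt (S.a Nn) \<le> sqrt (S.a 0 + (\<Sum>k<Nn. ee k)) + \<delta>/2 * (\<Sum>k<Nn. c k)"
    by (rule rec_sqrt[where a=S.a and c=c and ee=ee, OF a_nn c0 ee0 d0 rec])
  have csum: "(\<Sum>k<Nn. c k) \<le> (\<Sum>k<Nn. 2 * mtm_alpha n (Suc k) * sqrt (2 * real n * (1 + mtm_alpha n (Suc k)) / L))"
    unfolding c_def by (intro sum_mono c_bound[OF n1 L_pos])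
  have eps_r: "\<epsilon> powr (3/2) = \<epsilon> * sqrt \<epsilon>" by (rule eps_powr[OF eps_pos])
  have dd1: "\<delta>^2 \<le> \<epsilon> * sqrt \<epsilon> * L / (16 * sqrt 2 * real n * P0)"
  proof -
    have "\<delta> \<le> \<epsilon> powr (3/4) * sqrt L / (4 * root 4 2 * sqrt (real CARD('n) * P0))"
      using delta_le by simp
    then have "\<delta>^2 \<le> (\<epsilon> powr (3/4) * sqrt L / (4 * root 4 2 * sqrt (real CARD('n) * P0)))^2"
      using d0 by (intro power_mono) auto
    also have "\<dots> = (\<epsilon> powr (3/4))^2 * (sqrt L)^2 / (16 * (root 4 2)^2 * (sqrt (real CARD('n) * P0))^2)"
      by (simp add: power_divide power_mult_distrib)
    also have "\<dots> = \<epsilon> * sqrt \<epsilon> * L / (16 * sqrt 2 * real n * P0)"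
      unfolding eps_powr2[OF eps_pos] root42 using L_pos P00 unfolding n_def by (simp add: mult.assoc)
    finally show ?thesis .
  qed
  have dd2: "\<delta> \<le> \<epsilon> * sqrt \<epsilon> * sqrt L / (96 * sqrt (real n) * P0^2)"
    using delta_le unfolding eps_r n_def by simp
  have fa: "sqrt (P0^2/2 + (\<Sum>k<Nn. (real n)^2 * (mtm_alpha n (Suc k))^2 / L * \<delta>^2))
          + \<delta>/2 * (\<Sum>k<Nn. 2 * mtm_alpha n (Suc k) * sqrt (2 * real n * (1 + mtm_alpha n (Suc k)) / L))
         \<le> sqrt (3/2) * P0"
    and fA: "mtm_A n Nn \<ge> P0^2 / (2 * \<epsilon>)"
    using final_arith[OF n1 L_pos eps_pos P0pos d0 Nn1 _ _ dd1 dd2] Nlo Nhi unfolding z_def by auto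
  have "sqrt (S.a Nn) \<le> sqrt (3/2) * P0"
  proof -
    have "\<delta>/2 * (\<Sum>k<Nn. c k) \<le> \<delta>/2 * (\<Sum>k<Nn. 2 * mtm_alpha n (Suc k) * sqrt (2 * real n * (1 + mtm_alpha n (Suc k)) / L))"
      using csum d0 by (intro mult_left_mono) auto
    then show ?thesis using main1 fa unfolding a0 ee_def by linarith
  qed
  then have aN: "S.a Nn \<le> 3/2 * P0^2"
  proof -
    assume h: "sqrt (S.a Nn) \<le> sqrt (3/2) * P0"
    have "S.a Nn = (sqrt (S.a Nn))^2" using a_nn[of Nn] by simp
    also have "\<dots> \<le> (sqrt (3/2) * P0)^2" using h a_nn[of Nn] by (intro power_mono) auto
    also have "\<dots> = 3/2 * P0^2" by (simp add: power_mult_distrib)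
    finally show ?thesis .
  qed
  have Apos: "mtm_A n Nn > 0" using fA P0pos eps_pos by (smt (verit) divide_pos_pos zero_less_power)
  have [measurable]: "S.X Nn \<in> borel_measurable M" "S.U Nn \<in> borel_measurable M" by (rule S.measM_XU)+
  have ifX: "integrable M (\<lambda>\<omega>. f (S.X Nn \<omega>))" by (intro S.intg S.bdd_f S.vbdd_X) measurable
  have "mtm_A n Nn * ((\<integral>\<omega>. f (S.X Nn \<omega>) \<partial>M) - f xstar) = (\<integral>\<omega>. mtm_A n Nn * (f (S.X Nn \<omega>) - f xstar) \<partial>M)"
  proof -
    have ic: "integrable M (\<lambda>\<omega>. f xstar)" by (intro S.intg S.bdd_const) measurable
    have "(\<integral>\<omega>. mtm_A n Nn * (f (S.X Nn \<omega>) - f xstar) \<partial>M) = mtm_A n Nn * (\<integral>\<omega>. f (S.X Nn \<omega>) - f xstar \<partial>M)"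
      by (rule integral_mult_right_zero)
    also have "(\<integral>\<omega>. f (S.X Nn \<omega>) - f xstar \<partial>M) = (\<integral>\<omega>. f (S.X Nn \<omega>) \<partial>M) - (\<integral>\<omega>. f xstar \<partial>M)"
      by (rule Bochner_Integration.integral_diff[OF ifX ic])
    also have "(\<integral>\<omega>. f xstar \<partial>M) = f xstar" using prob_space.prob_space[OF prob] by simp
    finally show ?thesis ..
  qed
  also have "\<dots> \<le> (\<integral>\<omega>. S.Phi Nn \<omega> \<partial>M)"
  proof (rule integral_mono)
    show "integrable M (\<lambda>\<omega>. mtm_A n Nn * (f (S.X Nn \<omega>) - f xstar))" by (intro S.intg S.bdd_rules S.bdd_f S.vbdd_X) measurable
    show "integrable M (S.Phi Nn)" unfolding S.Phi_def[abs_def] by (intro S.intg S.bdd_rules S.bdd_f S.vbdd_X S.vbdd_U) measurable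
    fix \<omega> show "mtm_A n Nn * (f (S.X Nn \<omega>) - f xstar) \<le> S.Phi Nn \<omega>"
      unfolding S.Phi_def n_def using L_pos by simp
  qed
  also have "\<dots> = S.a Nn" unfolding S.a_def ..
  also have "\<dots> \<le> 3/2 * P0^2" by (rule aN)
  also have "\<dots> \<le> 3 * \<epsilon> * mtm_A n Nn"
  proof -
    have "3 * \<epsilon> * (P0^2 / (2 * \<epsilon>)) \<le> 3 * \<epsilon> * mtm_A n Nn" using fA eps_pos by (intro mult_left_mono) auto
    then show ?thesis using eps_pos by (simp add: field_simps)
  qed
  finally have "mtm_A n Nn * ((\<integral>\<omega>. f (S.X Nn \<omega>) \<partial>M) - f xstar) \<le> mtm_A n Nn * (3 * \<epsilon>)"
    by (simp add: algebra_simps)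
  then have "(\<integral>\<omega>. f (S.X Nn \<omega>) \<partial>M) - f xstar \<le> 3 * \<epsilon>"
    using Apos by (simp add: mult_le_cancel_left_pos)
  then show ?thesis unfolding S.X_def S.st_def Nn_def .
qed

end
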